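(* Consider ${\sf BubbleRank}$ (defined below) run for $n$ steps with parameter $\delta\in(0,1)$ in a stochastic click bandit satisfying A1–A5 with $\alpha(1)>\dots>\alpha(K)>0$. Let $S_1=\{(i,j)\in[K]^2:i<j\}$, $S_2=\{(i,j)\in[K]^2:i>j\}$, $$\mathcal{E}_{t,1}=\Big\{\forall(i,j)\in S_1:\ \frac{\alpha(i)-\alpha(j)}{\alpha(i)+\alpha(j)}\mathbf{n}_t(i,j)-2\sqrt{\mathbf{n}_t(i,j)\log(1/\delta)}\le\mathbf{s}_t(i,j)\Big\},$$ $$\mathcal{E}_{t,2}=\Big\{\forall(i,j)\in S_2:\ \mathbf{s}_t(i,j)\le2\sqrt{\mathbf{n}_t(i,j)\log(1/\delta)}\Big\},$$ $\mathcal{E}=\bigcap_{t\in[n]}(\mathcal{E}_{t,1}\cap\mathcal{E}_{t,2})$, and $\overline{\mathcal{E}}$ its complement. Then $\mathbb{P}(\overline{\mathcal{E}})\le\delta^{1/2}K^2n$.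
   Context: Model. Items $[K]$; a list $\mathcal{R}$ orders all $K$ items, $\mathcal{R}(k)$ is the item at position $k$, $\mathcal{R}^{-1}(i)$ the position of $i$; $\Pi_K$ the set of lists. At time $t$, $(\mathbf{A}_t,\mathbf{X}_t)\in\{0,1\}^K\times\{0,1\}^{\Pi_K\times[K]}$ is drawn i.i.d. from a product distribution; the learner displays $\mathbf{R}_t$ and observes $\mathbf{c}_t(k)=\mathbf{X}_t(\mathbf{R}_t,k)\mathbf{A}_t(\mathbf{R}_t(k))$. $\alpha=\mathbb{E}[\mathbf{A}_t]$, $\chi=\mathbb{E}[\mathbf{X}_t]$, $r(\mathcal{R},\alpha,\chi)=\sum_k\chi(\mathcal{R},k)\alpha(\mathcal{R}(k))$, $\mathcal{R}^*=(1,\dots,K)$. Assumptions for all lists $\mathcal{R},\mathcal{R}'$ and positions $k<\ell$: (A1) $r(\mathcal{R},\alpha,\chi)\le r(\mathcal{R}^*,\alpha,\chi)$; (A2) $\{\mathcal{R}(1..k-1)\}=\{\mathcal{R}'(1..k-1)\}\Rightarrow\chi(\mathcal{R},k)=\chi(\mathcal{R}',k)$; (A3) $\chi(\mathcal{R},k)\ge\chi(\mathcal{R},\ell)$; (A4) if $\mathcal{R},\mathcal{R}'$ differ only by exchanging items at positions $k,\ell$, then $\alpha(\mathcal{R}(k))\le\alpha(\mathcal{R}(\ell))\iff\chi(\mathcal{R},\ell)\ge\chi(\mathcal{R}',\ell)$; (A5) $\chi(\mathcal{R},k)\ge\chi(\mathcal{R}^*,k)$. Algorithm ${\sf BubbleRank}$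 (initial list $\mathcal{R}_0$): $\mathbf{s}_0\equiv\mathbf{n}_0\equiv0$, $\bar{\mathbf{R}}_1=\mathcal{R}_0$. For $t=1,\dots,n$: $h=t\bmod2$, $\mathbf{R}_t\leftarrow\bar{\mathbf{R}}_t$; for $k=1,\dots,\lfloor(K-h)/2\rfloor$ with $i=\mathbf{R}_t(2k-1+h)$, $j=\mathbf{R}_t(2k+h)$: if $\mathbf{s}_{t-1}(i,j)\le2\sqrt{\mathbf{n}_{t-1}(i,j)\log(1/\delta)}$ exchange these two positions with probability $1/2$. Display $\mathbf{R}_t$, observe $\mathbf{c}_t$. $\mathbf{s}_t=\mathbf{s}_{t-1}$, $\mathbf{n}_t=\mathbf{n}_{t-1}$; for each such $k$ with $i=\mathbf{R}_t(2k-1+h)$, $j=\mathbf{R}_t(2k+h)$: if $|\mathbf{c}_t(2k-1+h)-\mathbf{c}_t(2k+h)|=1$, add $\mathbf{c}_t(2k-1+h)-\mathbf{c}_t(2k+h)$ to $\mathbf{s}_t(i,j)$, its negative to $\mathbf{s}_t(j,i)$, and $1$ to $\mathbf{n}_t(i,j),\mathbf{n}_t(j,i)$. Then $\bar{\mathbf{R}}_{t+1}=\bar{\mathbf{R}}_t$; for $k=1,\dots,K-1$ in order with $i=\bar{\mathbf{R}}_{t+1}(k)$, $j=\bar{\mathbf{R}}_{t+1}(k+1)$: if $\mathbf{s}_t(j,i)>2\sqrt{\mathbf{n}_t(j,i)\log(1/\delta)}$ exchange positions $k,k+1$ of $\bar{\mathbf{R}}_{t+1}$. *)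

theory Defs
  imports "HOL-Probability.Probability"
begin

text \<open>Conventions: items are 0,...,K-1 (item i here is item i+1 of the paper),
positions are 0-indexed (position k here is position k+1 of the paper).
A list is a Isabelle list R with distinct entries and set {0..<K}; R ! k is the
item at position k.  The ideal list is [0..<K].\<close>

definition is_list :: "nat \<Rightarrow> nat list \<Rightarrow> bool" where
  "is_list K R \<longleftrightarrow> distinct R \<and> set R = {0..<K}"

text \<open>Environment: A_t has independent Bernoulli(alpha i) coordinates, X_t is drawn
from an arbitrary distribution PX over 0/1-valued functions on lists x positions,
independent of A_t (product distribution).\<close>

definition PA :: "nat \<Rightarrow> (nat \<Rightarrow> real) \<Rightarrow> (nat \<Rightarrow> bool) pmf" where
  "PA K \<alpha> = Pi_pmf {0..<K} False (\<lambda>i. bernoulli_pmf (\<alpha> i))"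

definition env :: "nat \<Rightarrow> (nat \<Rightarrow> real) \<Rightarrow> (nat list \<Rightarrow> nat \<Rightarrow> bool) pmf
    \<Rightarrow> ((nat \<Rightarrow> bool) \<times> (nat list \<Rightarrow> nat \<Rightarrow> bool)) pmf" where
  "env K \<alpha> PX = pair_pmf (PA K \<alpha>) PX"

definition chi :: "(nat list \<Rightarrow> nat \<Rightarrow> bool) pmf \<Rightarrow> nat list \<Rightarrow> nat \<Rightarrow> real" where
  "chi PX R k = measure_pmf.prob PX {X. X R k}"

definition rew :: "nat \<Rightarrow> (nat \<Rightarrow> real) \<Rightarrow> (nat list \<Rightarrow> nat \<Rightarrow> bool) pmf \<Rightarrow> nat list \<Rightarrow> real" where
  "rew K \<alpha> PX R = (\<Sum>k<K. chi PX R k * \<alpha> (R ! k))"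

definition swap_pos :: "nat \<Rightarrow> nat \<Rightarrow> 'a list \<Rightarrow> 'a list" where
  "swap_pos k l R = R[k := R ! l, l := R ! k]"

definition assumptions_A1_A5 :: "nat \<Rightarrow> (nat \<Rightarrow> real) \<Rightarrow> (nat list \<Rightarrow> nat \<Rightarrow> bool) pmf \<Rightarrow> bool" where
  "assumptions_A1_A5 K \<alpha> PX \<longleftrightarrow>
     (\<forall>R. is_list K R \<longrightarrow> rew K \<alpha> PX R \<le> rew K \<alpha> PX [0..<K]) \<and>
     (\<forall>R R' k. is_list K R \<longrightarrow> is_list K R' \<longrightarrow> k < K \<longrightarrow>
        set (take k R) = set (take k R') \<longrightarrow> chi PX R k = chi PX R' k) \<and>
     (\<forall>R k l. is_list K R \<longrightarrow> k < l \<longrightarrow> l < K \<longrightarrow> chi PX R k \<ge> chi PX R l) \<and>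
     (\<forall>R k l. is_list K R \<longrightarrow> k < l \<longrightarrow> l < K \<longrightarrow>
        (\<alpha> (R ! k) \<le> \<alpha> (R ! l) \<longleftrightarrow> chi PX R l \<ge> chi PX (swap_pos k l R) l)) \<and>
     (\<forall>R k. is_list K R \<longrightarrow> k < K \<longrightarrow> chi PX R k \<ge> chi PX [0..<K] k)"

definition thr :: "real \<Rightarrow> nat \<Rightarrow> real" where
  "thr \<delta> m = 2 * sqrt (real m * ln (1 / \<delta>))"

type_synonym stats = "(nat \<Rightarrow> nat \<Rightarrow> int) \<times> (nat \<Rightarrow> nat \<Rightarrow> nat)"

text \<open>State after step t: (bar R_{t+1}, s_t, n_t).\<close>
type_synonym state = "nat list \<times> (nat \<Rightarrow> nat \<Rightarrow> int) \<times> (nat \<Rightarrow> nat \<Rightarrow> nat)"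

fun rand_pairs :: "real \<Rightarrow> nat \<Rightarrow> (nat \<Rightarrow> nat \<Rightarrow> int) \<Rightarrow> (nat \<Rightarrow> nat \<Rightarrow> nat)
    \<Rightarrow> nat list \<Rightarrow> nat \<Rightarrow> nat list pmf" where
  "rand_pairs \<delta> h s n R 0 = return_pmf R"
| "rand_pairs \<delta> h s n R (Suc m) =
     bind_pmf (rand_pairs \<delta> h s n R m) (\<lambda>R'.
       let p = 2 * m + h; i = R' ! p; j = R' ! (p + 1) in
       if real_of_int (s i j) \<le> thr \<delta> (n i j)
       then map_pmf (\<lambda>b. if b then swap_pos p (p + 1) R' else R') (bernoulli_pmf (1/2))
       else return_pmf R')"

definition upd_pair :: "nat \<Rightarrow> nat list \<Rightarrow> (nat \<Rightarrow> bool) \<Rightarrow> nat \<Rightarrow> stats \<Rightarrow> stats" where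
  "upd_pair h R c m sn =
     (let p = 2 * m + h; i = R ! p; j = R ! (p + 1); (s, n) = sn in
      if c p \<noteq> c (p + 1) then
        (let d = (if c p then 1 else -1) :: int in
         (s(i := (s i)(j := s i j + d), j := (s j)(i := s j i - d)),
          n(i := (n i)(j := n i j + 1), j := (n j)(i := n j i + 1))))
      else (s, n))"

definition upd_stats :: "nat \<Rightarrow> nat \<Rightarrow> nat list \<Rightarrow> (nat \<Rightarrow> bool) \<Rightarrow> stats \<Rightarrow> stats" where
  "upd_stats K h R c sn = fold (upd_pair h R c) [0..<(K - h) div 2] sn"

definition upd_bar :: "real \<Rightarrow> nat \<Rightarrow> stats \<Rightarrow> nat list \<Rightarrow> nat list" where
  "upd_bar \<delta> K sn Rb =
     fold (\<lambda>k R. let i = R ! k; j = R ! (k + 1) in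
                  if real_of_int (fst sn j i) > thr \<delta> (snd sn j i) then swap_pos k (k + 1) R else R)
          [0..<K - 1] Rb"

definition br_step :: "nat \<Rightarrow> real \<Rightarrow> ((nat \<Rightarrow> bool) \<times> (nat list \<Rightarrow> nat \<Rightarrow> bool)) pmf
    \<Rightarrow> nat \<Rightarrow> state \<Rightarrow> state pmf" where
  "br_step K \<delta> E t st =
     (case st of (Rb, s, n) \<Rightarrow>
       let h = t mod 2 in
       bind_pmf (rand_pairs \<delta> h s n Rb ((K - h) div 2)) (\<lambda>R.
       map_pmf (\<lambda>(A, X).
         let c = (\<lambda>k. X R k \<and> A (R ! k));
             sn' = upd_stats K h R c (s, n)
         in (upd_bar \<delta> K sn' Rb, sn')) E))"

definition init_state :: "nat list \<Rightarrow> state" where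
  "init_state R0 = (R0, (\<lambda>_ _. 0), (\<lambda>_ _. 0))"

text \<open>Distribution of the trajectory: element t-1 of the list is the state after step t.\<close>

fun traj :: "nat \<Rightarrow> real \<Rightarrow> ((nat \<Rightarrow> bool) \<times> (nat list \<Rightarrow> nat \<Rightarrow> bool)) pmf
    \<Rightarrow> nat list \<Rightarrow> nat \<Rightarrow> state list pmf" where
  "traj K \<delta> E R0 0 = return_pmf []"
| "traj K \<delta> E R0 (Suc t) =
     bind_pmf (traj K \<delta> E R0 t) (\<lambda>xs.
       map_pmf (\<lambda>st'. xs @ [st'])
         (br_step K \<delta> E (Suc t) (if xs = [] then init_state R0 else last xs)))"

definition event_1 :: "nat \<Rightarrow> real \<Rightarrow> (nat \<Rightarrow> real) \<Rightarrow> state \<Rightarrow> bool" where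
  "event_1 K \<delta> \<alpha> st = (case st of (_, s, n) \<Rightarrow>
     (\<forall>i j. i < j \<and> j < K \<longrightarrow>
        (\<alpha> i - \<alpha> j) / (\<alpha> i + \<alpha> j) * real (n i j) - thr \<delta> (n i j) \<le> real_of_int (s i j)))"

definition event_2 :: "nat \<Rightarrow> real \<Rightarrow> state \<Rightarrow> bool" where
  "event_2 K \<delta> st = (case st of (_, s, n) \<Rightarrow>
     (\<forall>i j. j < i \<and> i < K \<longrightarrow> real_of_int (s i j) \<le> thr \<delta> (n i j)))"

end

theory Submission
  imports Defs "HOL-Probability.Hoeffding"
begin

lemma length_swap_pos[simp]: "length (swap_pos k l R) = length R"
  by (simp add: swap_pos_def)

lemma nth_swap_pos:
  "k < length R \<Longrightarrow> l < length R \<Longrightarrow>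
   swap_pos k l R ! q = (if q = l then R ! k else if q = k then R ! l else R ! q)"
  by (simp add: swap_pos_def nth_list_update)

lemma is_list_swap_pos:
  assumes "is_list K R" "k < K" "l < K"
  shows "is_list K (swap_pos k l R)"
proof -
  have len: "length R = K" using assms(1) unfolding is_list_def
    by (metis atLeast0LessThan card_lessThan distinct_card)
  show ?thesis using assms len unfolding is_list_def swap_pos_def
    by (simp add: distinct_swap set_swap)
qed

lemma is_list_length: "is_list K R \<Longrightarrow> length R = K"
  unfolding is_list_def by (metis atLeast0LessThan card_lessThan distinct_card)

lemma swap_pos_invol:
  "p + 1 < length R \<Longrightarrow> swap_pos p (p + 1) (swap_pos p (p + 1) R) = R"
  by (rule nth_equalityI) (auto simp: nth_swap_pos)

lemma swap_pos_invol'[simp]: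
  "Suc p < length R \<Longrightarrow> swap_pos p (Suc p) (swap_pos p (Suc p) R) = R"
  using swap_pos_invol by simp

lemma swap_pos_commute:
  assumes "p + 1 < length R" "q + 1 < length R" "p + 1 < q \<or> q + 1 < p"
  shows "swap_pos p (p + 1) (swap_pos q (q + 1) R) = swap_pos q (q + 1) (swap_pos p (p + 1) R)"
  using assms by (intro nth_equalityI) (auto simp: nth_swap_pos)

lemma take_swap_pos: "take p (swap_pos p (p + 1) R) = take p R"
  by (simp add: swap_pos_def)

lemma map_not_bernoulli_half: "map_pmf Not (bernoulli_pmf (1/2)) = bernoulli_pmf (1/2)"
proof (rule pmf_eqI)
  fix i :: bool
  have "Not -` {i} = {\<not> i}" by auto
  then show "pmf (map_pmf Not (bernoulli_pmf (1/2))) i = pmf (bernoulli_pmf (1/2)) i"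
    by (simp add: pmf_map measure_pmf_single)
qed

abbreviation cond_rp :: "real \<Rightarrow> (nat \<Rightarrow> nat \<Rightarrow> int) \<Rightarrow> (nat \<Rightarrow> nat \<Rightarrow> nat) \<Rightarrow> nat \<Rightarrow> nat \<Rightarrow> bool" where
  "cond_rp \<delta> s n x y \<equiv> real_of_int (s x y) \<le> thr \<delta> (n x y)"

lemma rp_support:
  assumes "R \<in> set_pmf (rand_pairs \<delta> h s n Rb M)" "2 * M + h \<le> length Rb"
  shows "length R = length Rb \<and> (\<forall>q. 2 * M + h \<le> q \<longrightarrow> R ! q = Rb ! q) \<and>
    (\<forall>m<M. (R ! (2*m+h) = Rb ! (2*m+h) \<and> R ! (2*m+h+1) = Rb ! (2*m+h+1)) \<or>
            (R ! (2*m+h) = Rb ! (2*m+h+1) \<and> R ! (2*m+h+1) = Rb ! (2*m+h) \<and>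
             cond_rp \<delta> s n (Rb ! (2*m+h)) (Rb ! (2*m+h+1)))) \<and>
    (\<forall>K. is_list K Rb \<longrightarrow> is_list K R)"
  using assms
proof (induction M arbitrary: R)
  case 0
  then show ?case by simp
next
  case (Suc M)
  define p where "p = 2 * M + h"
  from Suc.prems(1) obtain R' where R': "R' \<in> set_pmf (rand_pairs \<delta> h s n Rb M)"
    and R: "R \<in> set_pmf (
       if real_of_int (s (R' ! p) (R' ! (p + 1))) \<le> thr \<delta> (n (R' ! p) (R' ! (p + 1)))
       then map_pmf (\<lambda>b. if b then swap_pos p (p + 1) R' else R') (bernoulli_pmf (1/2))
       else return_pmf R')"
    unfolding p_def by (auto simp: Let_def)
  have IH: "length R' = length Rb \<and> (\<forall>q. 2 * M + h \<le> q \<longrightarrow> R' ! q = Rb ! q) \<and>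
    (\<forall>m<M. (R' ! (2*m+h) = Rb ! (2*m+h) \<and> R' ! (2*m+h+1) = Rb ! (2*m+h+1)) \<or>
            (R' ! (2*m+h) = Rb ! (2*m+h+1) \<and> R' ! (2*m+h+1) = Rb ! (2*m+h) \<and>
             cond_rp \<delta> s n (Rb ! (2*m+h)) (Rb ! (2*m+h+1)))) \<and>
    (\<forall>K. is_list K Rb \<longrightarrow> is_list K R')"
    using Suc.IH[OF R'] Suc.prems(2) by simp
  have pl: "p + 1 < length R'" using IH Suc.prems(2) by (simp add: p_def)
  have e1: "R' ! p = Rb ! p" "R' ! (p+1) = Rb ! (p+1)" using IH by (auto simp: p_def)
  have cases: "R = R' \<or> (R = swap_pos p (p+1) R' \<and> cond_rp \<delta> s n (Rb ! p) (Rb ! (p+1)))"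
    using R e1 by (auto split: if_splits)
  show ?case
  proof (rule disjE[OF cases])
    assume "R = R'"
    then show ?thesis using IH e1 by (auto simp: p_def less_Suc_eq)
  next
    assume A: "R = swap_pos p (p+1) R' \<and> cond_rp \<delta> s n (Rb ! p) (Rb ! (p+1))"
    have nth: "\<And>q. R ! q = (if q = p+1 then R' ! p else if q = p then R' ! (p+1) else R' ! q)"
      using A pl by (simp add: nth_swap_pos)
    have l1: "length R = length Rb" using A IH by simp
    have l2: "\<forall>q. 2 * Suc M + h \<le> q \<longrightarrow> R ! q = Rb ! q" using IH nth by (auto simp: p_def)
    have l3: "\<forall>m<Suc M. (R ! (2*m+h) = Rb ! (2*m+h) \<and> R ! (2*m+h+1) = Rb ! (2*m+h+1)) \<or>
            (R ! (2*m+h) = Rb ! (2*m+h+1) \<and> R ! (2*m+h+1) = Rb ! (2*m+h) \<and>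
             cond_rp \<delta> s n (Rb ! (2*m+h)) (Rb ! (2*m+h+1)))"
    proof (intro allI impI)
      fix m assume "m < Suc M"
      then consider "m < M" | "m = M" by linarith
      then show "(R ! (2*m+h) = Rb ! (2*m+h) \<and> R ! (2*m+h+1) = Rb ! (2*m+h+1)) \<or>
            (R ! (2*m+h) = Rb ! (2*m+h+1) \<and> R ! (2*m+h+1) = Rb ! (2*m+h) \<and>
             cond_rp \<delta> s n (Rb ! (2*m+h)) (Rb ! (2*m+h+1)))"
      proof cases
        case 1
        then have "2*m+h \<noteq> p" "2*m+h \<noteq> p+1" "2*m+h+1 \<noteq> p" "2*m+h+1 \<noteq> p+1"
          by (auto simp: p_def)
        then show ?thesis using IH 1 nth by auto
      next
        case 2
        then show ?thesis using nth e1 A by (auto simp: p_def)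
      qed
    qed
    have l4: "\<forall>K. is_list K Rb \<longrightarrow> is_list K R"
    proof (intro allI impI)
      fix K assume "is_list K Rb"
      then have il: "is_list K R'" using IH by blast
      then have "length R' = K" by (rule is_list_length)
      then show "is_list K R" using A pl is_list_swap_pos[OF il, of p "p+1"] by simp
    qed
    show ?thesis using l1 l2 l3 l4 by blast
  qed
qed

lemma rp_sym:
  assumes "m < M" "2 * M + h \<le> length Rb"
    and "cond_rp \<delta> s n (Rb ! (2*m+h)) (Rb ! (2*m+h+1))"
  shows "map_pmf (swap_pos (2*m+h) (2*m+h+1)) (rand_pairs \<delta> h s n Rb M) = rand_pairs \<delta> h s n Rb M"
  using assms
proof (induction M)
  case 0
  then show ?case by simp
next
  case (Suc M)
  define p where "p = 2 * M + h"
  define sw :: "nat list \<Rightarrow> nat list" where "sw = swap_pos (2*m+h) (2*m+h+1)"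
  define stp where "stp = (\<lambda>R'. let i = R' ! p; j = R' ! (p + 1) in
       if real_of_int (s i j) \<le> thr \<delta> (n i j)
       then map_pmf (\<lambda>b. if b then swap_pos p (p + 1) R' else R') (bernoulli_pmf (1/2))
       else return_pmf R')"
  have rs: "rand_pairs \<delta> h s n Rb (Suc M) = bind_pmf (rand_pairs \<delta> h s n Rb M) stp"
    unfolding stp_def p_def by (simp add: Let_def)
  have supp: "\<And>R'. R' \<in> set_pmf (rand_pairs \<delta> h s n Rb M) \<Longrightarrow>
      length R' = length Rb \<and> R' ! p = Rb ! p \<and> R' ! (p+1) = Rb ! (p+1)"
    using rp_support[of _ \<delta> h s n Rb M] Suc.prems by (auto simp: p_def)
  show ?case
  proof (cases "m = M")
    case True
    have "map_pmf sw (stp R') = stp R'" if "R' \<in> set_pmf (rand_pairs \<delta> h s n Rb M)" for R'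
    proof -
      have pl: "p + 1 < length R'" using supp[OF that] Suc.prems by (simp add: p_def)
      have c: "cond_rp \<delta> s n (R' ! p) (R' ! (p+1))" using supp[OF that] Suc.prems True
        by (simp add: p_def)
      have "map_pmf sw (stp R') = map_pmf (\<lambda>b. if b then swap_pos p (p + 1) R' else R')
               (map_pmf Not (bernoulli_pmf (1/2)))"
        using c pl by (simp add: stp_def pmf.map_comp o_def sw_def True p_def
             if_distrib cong: if_cong) (intro map_pmf_cong, auto)
      also have "\<dots> = stp R'" using c by (simp add: map_not_bernoulli_half stp_def)
      finally show ?thesis .
    qed
    then have "map_pmf sw (rand_pairs \<delta> h s n Rb (Suc M)) =
        bind_pmf (rand_pairs \<delta> h s n Rb M) stp"
      unfolding rs map_bind_pmf by (intro bind_pmf_cong) auto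
    then show ?thesis using rs sw_def by simp
  next
    case False
    then have mM: "m < M" using Suc.prems by simp
    have IH: "map_pmf sw (rand_pairs \<delta> h s n Rb M) = rand_pairs \<delta> h s n Rb M"
      using Suc.IH[OF mM] Suc.prems by (simp add: sw_def)
    have "map_pmf sw (stp R') = stp (sw R')" if "R' \<in> set_pmf (rand_pairs \<delta> h s n Rb M)" for R'
    proof -
      have l: "length R' = length Rb" using supp[OF that] by simp
      have pl: "p + 1 < length R'" using l Suc.prems by (simp add: p_def)
      have ml: "2*m+h+1 < length R'" using l Suc.prems mM by simp
      have d: "2*m+h+1 < p" using mM by (simp add: p_def)
      have n1: "sw R' ! p = R' ! p" "sw R' ! Suc p = R' ! Suc p"
        using ml d by (auto simp: sw_def nth_swap_pos)
      have cm: "sw (swap_pos p (Suc p) R') = swap_pos p (Suc p) (sw R')"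
        unfolding sw_def using swap_pos_commute[of p R' "2*m+h"] pl ml d by simp
      show ?thesis
        by (simp add: stp_def n1 Let_def cm if_distrib pmf.map_comp o_def cong: if_cong)
    qed
    then have "map_pmf sw (rand_pairs \<delta> h s n Rb (Suc M)) =
        bind_pmf (rand_pairs \<delta> h s n Rb M) (\<lambda>R'. stp (sw R'))"
      unfolding rs map_bind_pmf by (intro bind_pmf_cong) auto
    also have "\<dots> = bind_pmf (map_pmf sw (rand_pairs \<delta> h s n Rb M)) stp"
      by (simp add: bind_map_pmf)
    also have "\<dots> = rand_pairs \<delta> h s n Rb (Suc M)" using IH rs by simp
    finally show ?thesis by (simp add: sw_def)
  qed
qed

definition contrib :: "nat \<Rightarrow> nat list \<Rightarrow> (nat \<Rightarrow> bool) \<Rightarrow> nat \<Rightarrow> nat \<Rightarrow> nat \<Rightarrow> int" where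
  "contrib h R c i j m = (let p = 2*m+h in
     if c p = c (p+1) then 0
     else if R ! p = i \<and> R ! (p+1) = j then (if c p then 1 else -1)
     else if R ! p = j \<and> R ! (p+1) = i then (if c p then -1 else 1) else 0)"

lemma upd_pair_entry:
  assumes "i \<noteq> j"
  shows "fst (upd_pair h R c m (s, n)) i j = s i j + contrib h R c i j m \<and>
         fst (upd_pair h R c m (s, n)) j i = s j i - contrib h R c i j m \<and>
         snd (upd_pair h R c m (s, n)) i j = n i j + nat \<bar>contrib h R c i j m\<bar> \<and>
         snd (upd_pair h R c m (s, n)) j i = n j i + nat \<bar>contrib h R c i j m\<bar>"
  using assms unfolding upd_pair_def contrib_def Let_def by auto

lemma fold_entry:
  assumes "i \<noteq> j"
  shows "fst (fold (upd_pair h R c) [0..<M] (s, n)) i j = s i j + (\<Sum>m<M. contrib h R c i j m) \<and>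
         fst (fold (upd_pair h R c) [0..<M] (s, n)) j i = s j i - (\<Sum>m<M. contrib h R c i j m) \<and>
         snd (fold (upd_pair h R c) [0..<M] (s, n)) i j = n i j + (\<Sum>m<M. nat \<bar>contrib h R c i j m\<bar>) \<and>
         snd (fold (upd_pair h R c) [0..<M] (s, n)) j i = n j i + (\<Sum>m<M. nat \<bar>contrib h R c i j m\<bar>)"
proof (induction M)
  case 0
  then show ?case by simp
next
  case (Suc M)
  obtain s' n' where sn: "fold (upd_pair h R c) [0..<M] (s, n) = (s', n')" by fastforce
  have "fold (upd_pair h R c) [0..<Suc M] (s, n) = upd_pair h R c M (s', n')"
    using sn by simp
  then show ?case using Suc.IH sn upd_pair_entry[OF assms, of h R c M s' n'] by simp
qed

lemma contrib_nz:
  "contrib h R c i j m \<noteq> 0 \<Longrightarrow>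
   (R ! (2*m+h) = i \<and> R ! (2*m+h+1) = j) \<or> (R ! (2*m+h) = j \<and> R ! (2*m+h+1) = i)"
  unfolding contrib_def Let_def by (auto split: if_splits)

lemma contrib_range: "contrib h R c i j m \<in> {-1, 0, 1}"
  unfolding contrib_def Let_def by auto

lemma pair_unique:
  assumes "distinct R" "2*m+h+1 < length R" "2*m'+h+1 < length R" "i \<noteq> j"
    and "(R ! (2*m+h) = i \<and> R ! (2*m+h+1) = j) \<or> (R ! (2*m+h) = j \<and> R ! (2*m+h+1) = i)"
    and "(R ! (2*m'+h) = i \<and> R ! (2*m'+h+1) = j) \<or> (R ! (2*m'+h) = j \<and> R ! (2*m'+h+1) = i)"
  shows "m = m'"
proof -
  have inj: "\<And>a b. a < length R \<Longrightarrow> b < length R \<Longrightarrow> R ! a = R ! b \<Longrightarrow> a = b"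
    using assms(1) nth_eq_iff_index_eq by blast
  from assms(5,6) show ?thesis
  proof (elim disjE conjE)
    assume "R ! (2*m+h) = i" "R ! (2*m'+h) = i"
    then show ?thesis using inj[of "2*m+h" "2*m'+h"] assms(2,3) by simp
  next
    assume "R ! (2*m+h) = i" "R ! (2*m'+h+1) = i"
    then show ?thesis using inj[of "2*m+h" "2*m'+h+1"] assms(2,3) by presburger
  next
    assume "R ! (2*m+h+1) = i" "R ! (2*m'+h) = i"
    then show ?thesis using inj[of "2*m+h+1" "2*m'+h"] assms(2,3) by presburger
  next
    assume "R ! (2*m+h+1) = i" "R ! (2*m'+h+1) = i"
    then show ?thesis using inj[of "2*m+h+1" "2*m'+h+1"] assms(2,3) by simp
  qed
qed

lemma contrib_sum_single:
  assumes "distinct R" "2*M+h \<le> length R" "i \<noteq> j" "m0 < M"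
    and "(R ! (2*m0+h) = i \<and> R ! (2*m0+h+1) = j) \<or> (R ! (2*m0+h) = j \<and> R ! (2*m0+h+1) = i)"
  shows "(\<Sum>m<M. contrib h R c i j m) = contrib h R c i j m0"
    and "(\<Sum>m<M. nat \<bar>contrib h R c i j m\<bar>) = nat \<bar>contrib h R c i j m0\<bar>"
proof -
  have z: "contrib h R c i j m = 0" if "m < M" "m \<noteq> m0" for m
  proof (rule ccontr)
    assume "contrib h R c i j m \<noteq> 0"
    from contrib_nz[OF this] have "m = m0"
      using pair_unique[OF assms(1) _ _ assms(3) _ assms(5), of m] that assms(2,4) by simp
    then show False using that by simp
  qed
  show "(\<Sum>m<M. contrib h R c i j m) = contrib h R c i j m0"
    using assms(4) z by (subst sum.remove[of _ m0]) (auto intro!: sum.neutral)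
  show "(\<Sum>m<M. nat \<bar>contrib h R c i j m\<bar>) = nat \<bar>contrib h R c i j m0\<bar>"
    using assms(4) z by (subst sum.remove[of _ m0]) (auto intro!: sum.neutral)
qed

lemma contrib_sum_none:
  assumes "\<forall>m<M. \<not> ((R ! (2*m+h) = i \<and> R ! (2*m+h+1) = j) \<or> (R ! (2*m+h) = j \<and> R ! (2*m+h+1) = i))"
  shows "(\<Sum>m<M. contrib h R c i j m) = 0" "(\<Sum>m<M. nat \<bar>contrib h R c i j m\<bar>) = 0"
  using assms contrib_nz by (auto intro!: sum.neutral) blast+

lemma contrib_sum_props:
  assumes "distinct R" "2*M+h \<le> length R" "i \<noteq> j"
  shows "(\<Sum>m<M. contrib h R c i j m) \<in> {-1,0,1} \<and>
         (\<Sum>m<M. nat \<bar>contrib h R c i j m\<bar>) = nat \<bar>\<Sum>m<M. contrib h R c i j m\<bar>"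
proof (cases "\<exists>m0<M. (R ! (2*m0+h) = i \<and> R ! (2*m0+h+1) = j) \<or> (R ! (2*m0+h) = j \<and> R ! (2*m0+h+1) = i)")
  case True
  then obtain m0 where "m0 < M" "(R ! (2*m0+h) = i \<and> R ! (2*m0+h+1) = j) \<or> (R ! (2*m0+h) = j \<and> R ! (2*m0+h+1) = i)"
    by blast
  then show ?thesis using contrib_sum_single[OF assms] contrib_range by simp
next
  case False
  then show ?thesis using contrib_sum_none[of M R h i j c] by simp
qed

lemma prob_pair_times:
  "measure_pmf.prob (pair_pmf M N) (A \<times> B) = measure_pmf.prob M A * measure_pmf.prob N B"
proof -
  have "measure_pmf.prob (pair_pmf M N) (A \<times> B) =
        measure_pmf.prob (pair_pmf M N) ((A \<times> B) \<inter> set_pmf (pair_pmf M N))"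
    by (rule measure_Int_set_pmf[symmetric])
  also have "(A \<times> B) \<inter> set_pmf (pair_pmf M N) = (A \<inter> set_pmf M) \<times> (B \<inter> set_pmf N)"
    by auto
  also have "measure_pmf.prob (pair_pmf M N) \<dots> =
      measure_pmf.prob M (A \<inter> set_pmf M) * measure_pmf.prob N (B \<inter> set_pmf N)"
    by (rule measure_pmf_prob_product) (auto intro: countable_subset)
  finally show ?thesis by (simp add: measure_Int_set_pmf)
qed

lemma prob_PA_two:
  assumes "x \<noteq> y" "x < K" "y < K" "\<And>i. i < K \<Longrightarrow> 0 \<le> \<alpha> i \<and> \<alpha> i \<le> 1"
  shows "measure_pmf.prob (PA K \<alpha>) {A. A x \<and> \<not> A y} = \<alpha> x * (1 - \<alpha> y)"
proof -
  define B where "B = (\<lambda>z. if z = x then {True} else if z = y then {False} else (UNIV :: bool set))"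
  have "{A. A x \<and> \<not> A y} = Pi {0..<K} B"
    using assms(1-3) by (auto simp: B_def Pi_def)
  then have "measure_pmf.prob (PA K \<alpha>) {A. A x \<and> \<not> A y} =
      (\<Prod>z\<in>{0..<K}. measure_pmf.prob (bernoulli_pmf (\<alpha> z)) (B z))"
    unfolding PA_def by (simp add: measure_Pi_pmf_Pi)
  also have "\<dots> = (\<Prod>z\<in>{0..<K}. if z = x then \<alpha> x else if z = y then 1 - \<alpha> y else 1)"
    using assms(4) by (intro prod.cong) (auto simp: B_def measure_pmf_single)
  also have "\<dots> = \<alpha> x * (1 - \<alpha> y)"
  proof -
    define f where "f = (\<lambda>z. if z = x then \<alpha> x else if z = y then 1 - \<alpha> y else 1)"
    have "(\<Prod>z\<in>{0..<K}. f z) = f x * (\<Prod>z\<in>{0..<K}-{x}. f z)"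
      by (rule prod.remove) (use assms in auto)
    moreover have "(\<Prod>z\<in>{0..<K}-{x}. f z) = f y * (\<Prod>z\<in>{0..<K}-{x}-{y}. f z)"
      by (rule prod.remove) (use assms in auto)
    moreover have "(\<Prod>z\<in>{0..<K}-{x}-{y}. f z) = 1"
      by (rule prod.neutral) (auto simp: f_def)
    ultimately show ?thesis using assms(1) by (simp add: f_def)
  qed
  finally show ?thesis .
qed

lemma prob_PA_one:
  assumes "x < K" "\<And>i. i < K \<Longrightarrow> 0 \<le> \<alpha> i \<and> \<alpha> i \<le> 1"
  shows "measure_pmf.prob (PA K \<alpha>) {A. A x} = \<alpha> x"
proof -
  define B where "B = (\<lambda>z. if z = x then {True} else (UNIV :: bool set))"
  have "{A. A x} = Pi {0..<K} B"
    using assms(1) by (auto simp: B_def Pi_def)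
  then have "measure_pmf.prob (PA K \<alpha>) {A. A x} =
      (\<Prod>z\<in>{0..<K}. measure_pmf.prob (bernoulli_pmf (\<alpha> z)) (B z))"
    unfolding PA_def by (simp add: measure_Pi_pmf_Pi)
  also have "\<dots> = (\<Prod>z\<in>{0..<K}. if z = x then \<alpha> x else 1)"
    using assms(2) by (intro prod.cong) (auto simp: B_def measure_pmf_single)
  also have "\<dots> = \<alpha> x"
    using assms(1) by (simp add: prod.If_cases Int_def)
  finally show ?thesis .
qed

lemma click_prob:
  assumes "x \<noteq> y" "x < K" "y < K" "\<And>i. i < K \<Longrightarrow> 0 \<le> \<alpha> i \<and> \<alpha> i \<le> 1"
  shows "measure_pmf.prob (env K \<alpha> PX) {(A, X). A x \<and> P X \<and> \<not> (A y \<and> Q X)} =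
    \<alpha> x * (1 - \<alpha> y) * measure_pmf.prob PX {X. P X \<and> Q X} + \<alpha> x * measure_pmf.prob PX {X. P X \<and> \<not> Q X}"
proof -
  have eq: "{(A, X). A x \<and> P X \<and> \<not> (A y \<and> Q X)} =
     ({A. A x \<and> \<not> A y} \<times> {X. P X \<and> Q X}) \<union> ({A. A x} \<times> {X. P X \<and> \<not> Q X})"
    by auto
  have "measure_pmf.prob (env K \<alpha> PX) {(A, X). A x \<and> P X \<and> \<not> (A y \<and> Q X)} =
     measure_pmf.prob (env K \<alpha> PX) ({A. A x \<and> \<not> A y} \<times> {X. P X \<and> Q X}) +
     measure_pmf.prob (env K \<alpha> PX) ({A. A x} \<times> {X. P X \<and> \<not> Q X})"
    unfolding eq by (rule measure_pmf.finite_measure_Union) auto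
  then show ?thesis
    unfolding env_def prob_pair_times using prob_PA_two[OF assms] prob_PA_one[OF assms(2,4)]
    by simp
qed

lemma prob_split:
  "measure_pmf.prob M {X. P X} = measure_pmf.prob M {X. P X \<and> Q X} + measure_pmf.prob M {X. P X \<and> \<not> Q X}"
proof -
  have "{X. P X} = {X. P X \<and> Q X} \<union> {X. P X \<and> \<not> Q X}" by auto
  then show ?thesis by (metis (no_types, lifting) measure_pmf.finite_measure_Union disjoint_iff
      mem_Collect_eq sets_measure_pmf UNIV_I)
qed

definition cl :: "nat list \<Rightarrow> (nat \<Rightarrow> bool) \<times> (nat list \<Rightarrow> nat \<Rightarrow> bool) \<Rightarrow> nat \<Rightarrow> bool" where
  "cl R AX = (\<lambda>k. snd AX R k \<and> fst AX (R ! k))"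

definition nxt :: "nat \<Rightarrow> real \<Rightarrow> nat \<Rightarrow> nat list \<Rightarrow> (nat \<Rightarrow> nat \<Rightarrow> int) \<Rightarrow> (nat \<Rightarrow> nat \<Rightarrow> nat)
   \<Rightarrow> nat list \<Rightarrow> (nat \<Rightarrow> bool) \<times> (nat list \<Rightarrow> nat \<Rightarrow> bool) \<Rightarrow> state" where
  "nxt K \<delta> h Rb s n R AX = (let sn' = upd_stats K h R (cl R AX) (s, n) in (upd_bar \<delta> K sn' Rb, sn'))"

definition Dsum :: "nat \<Rightarrow> nat \<Rightarrow> nat list \<Rightarrow> (nat \<Rightarrow> bool) \<Rightarrow> nat \<Rightarrow> nat \<Rightarrow> int" where
  "Dsum K h R c i j = (\<Sum>m<(K - h) div 2. contrib h R c i j m)"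

lemma br_step_eq:
  "br_step K \<delta> E t (Rb, s, n) =
   bind_pmf (rand_pairs \<delta> (t mod 2) s n Rb ((K - t mod 2) div 2)) (\<lambda>R. map_pmf (nxt K \<delta> (t mod 2) Rb s n R) E)"
  unfolding br_step_def nxt_def cl_def by (simp add: Let_def case_prod_unfold)

lemma fold_swaps_is_list:
  assumes "\<forall>k\<in>set ks. k + 1 < K" "is_list K R"
    and "\<And>k R. P k R \<or> \<not> P k R"
  shows "is_list K (fold (\<lambda>k R. if P k R then swap_pos k (k + 1) R else R) ks R)"
  using assms(1,2)
proof (induction ks arbitrary: R)
  case Nil
  then show ?case by simp
next
  case (Cons k ks)
  have "is_list K (if P k R then swap_pos k (k + 1) R else R)"
    using Cons.prems is_list_swap_pos[of K R k "k+1"] by auto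
  then show ?case using Cons.IH Cons.prems by simp
qed

lemma upd_bar_is_list:
  assumes "is_list K Rb"
  shows "is_list K (upd_bar \<delta> K sn Rb)"
proof -
  have "upd_bar \<delta> K sn Rb = fold (\<lambda>k R. if real_of_int (fst sn (R ! (k+1)) (R ! k)) > thr \<delta> (snd sn (R ! (k+1)) (R ! k))
        then swap_pos k (k + 1) R else R) [0..<K - 1] Rb"
    unfolding upd_bar_def by (simp add: Let_def)
  also have "is_list K \<dots>"
    by (rule fold_swaps_is_list) (use assms in auto)
  finally show ?thesis .
qed

lemma M_bound: "i < K \<Longrightarrow> (h::nat) < 2 \<Longrightarrow> 2 * ((K - h) div 2) + h \<le> K"
  by (cases "h = 0") auto

lemma nxt_entry:
  assumes "i \<noteq> j"
  shows "fst (snd (nxt K \<delta> h Rb s n R AX)) i j = s i j + Dsum K h R (cl R AX) i j \<and>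
         fst (snd (nxt K \<delta> h Rb s n R AX)) j i = s j i - Dsum K h R (cl R AX) i j \<and>
         snd (snd (nxt K \<delta> h Rb s n R AX)) i j = n i j + (\<Sum>m<(K - h) div 2. nat \<bar>contrib h R (cl R AX) i j m\<bar>) \<and>
         snd (snd (nxt K \<delta> h Rb s n R AX)) j i = n j i + (\<Sum>m<(K - h) div 2. nat \<bar>contrib h R (cl R AX) i j m\<bar>)"
  unfolding nxt_def upd_stats_def Dsum_def Let_def using fold_entry[OF assms] by simp

lemma step_support:
  assumes "is_list K Rb" "i \<noteq> j" "i < K" "j < K"
    and "st' \<in> set_pmf (br_step K \<delta> E t (Rb, s, n))"
  shows "\<exists>d::int. d \<in> {-1,0,1} \<and> fst (snd st') i j = s i j + d \<and> fst (snd st') j i = s j i - d \<and>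
     snd (snd st') i j = n i j + nat \<bar>d\<bar> \<and> snd (snd st') j i = n j i + nat \<bar>d\<bar> \<and> is_list K (fst st')"
proof -
  define h where "h = t mod 2"
  define M where "M = (K - h) div 2"
  from assms(5) obtain R AX where R: "R \<in> set_pmf (rand_pairs \<delta> h s n Rb M)"
    and st': "st' = nxt K \<delta> h Rb s n R AX"
    unfolding br_step_eq h_def M_def by auto
  have lenRb: "length Rb = K" using assms(1) by (rule is_list_length)
  have MK: "2 * M + h \<le> K" unfolding M_def using M_bound[OF assms(3)] by (simp add: h_def)
  have Rl: "is_list K R" using rp_support[OF R] MK lenRb assms(1) by auto
  have dR: "distinct R" "length R = K" using Rl is_list_length unfolding is_list_def by auto
  have props: "Dsum K h R (cl R AX) i j \<in> {-1,0,1} \<and>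
     (\<Sum>m<M. nat \<bar>contrib h R (cl R AX) i j m\<bar>) = nat \<bar>Dsum K h R (cl R AX) i j\<bar>"
    using contrib_sum_props[OF dR(1) _ assms(2), of M h "cl R AX"] MK dR(2)
    unfolding Dsum_def M_def by simp
  have "is_list K (fst st')" unfolding st' nxt_def Let_def using upd_bar_is_list[OF assms(1)] by simp
  then show ?thesis using nxt_entry[OF assms(2), of K \<delta> h Rb s n R AX] props st'
    unfolding M_def by (intro exI[of _ "Dsum K h R (cl R AX) i j"]) simp
qed

lemma A2': "assumptions_A1_A5 K \<alpha> PX \<Longrightarrow> is_list K R \<Longrightarrow> is_list K R' \<Longrightarrow> k < K \<Longrightarrow>
   set (take k R) = set (take k R') \<Longrightarrow> chi PX R k = chi PX R' k"
  unfolding assumptions_A1_A5_def by blast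

lemma A3': "assumptions_A1_A5 K \<alpha> PX \<Longrightarrow> is_list K R \<Longrightarrow> k < l \<Longrightarrow> l < K \<Longrightarrow>
   chi PX R l \<le> chi PX R k"
  unfolding assumptions_A1_A5_def by blast

lemma A4': "assumptions_A1_A5 K \<alpha> PX \<Longrightarrow> is_list K R \<Longrightarrow> k < l \<Longrightarrow> l < K \<Longrightarrow>
   \<alpha> (R ! k) \<le> \<alpha> (R ! l) \<Longrightarrow> chi PX (swap_pos k l R) l \<le> chi PX R l"
  unfolding assumptions_A1_A5_def by blast

abbreviation G where
  "G K \<alpha> PX h R i j v \<equiv> measure_pmf.prob (env K \<alpha> PX) {AX. Dsum K h R (cl R AX) i j = v}"

lemma Dsum_at:
  assumes "is_list K R" "i \<noteq> j" "m0 < (K - h) div 2" "2 * ((K - h) div 2) + h \<le> K"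
    and "(R ! (2*m0+h) = i \<and> R ! (2*m0+h+1) = j) \<or> (R ! (2*m0+h) = j \<and> R ! (2*m0+h+1) = i)"
  shows "Dsum K h R c i j = contrib h R c i j m0"
  unfolding Dsum_def
  by (rule contrib_sum_single(1)[OF _ _ assms(2,3,5)])
     (use assms(1) is_list_length[OF assms(1)] assms(4) in \<open>auto simp: is_list_def\<close>)

lemma G_formula1:
  assumes "is_list K R" "i \<noteq> j" "i < K" "j < K" "m0 < (K - h) div 2" "2 * ((K - h) div 2) + h \<le> K"
    and "p = 2*m0+h" "R ! p = i" "R ! (p+1) = j"
    and al: "\<And>i. i < K \<Longrightarrow> 0 \<le> \<alpha> i \<and> \<alpha> i \<le> 1"
  shows "G K \<alpha> PX h R i j 1 = \<alpha> i * (1 - \<alpha> j) * measure_pmf.prob PX {X. X R p \<and> X R (p+1)}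
            + \<alpha> i * measure_pmf.prob PX {X. X R p \<and> \<not> X R (p+1)}"
    and "G K \<alpha> PX h R i j (-1) = \<alpha> j * (1 - \<alpha> i) * measure_pmf.prob PX {X. X R (p+1) \<and> X R p}
            + \<alpha> j * measure_pmf.prob PX {X. X R (p+1) \<and> \<not> X R p}"
proof -
  have D: "\<And>c. Dsum K h R c i j = contrib h R c i j m0"
    using Dsum_at[OF assms(1,2,5,6)] assms(7-9) by simp
  have e1: "{AX. Dsum K h R (cl R AX) i j = 1} = {(A, X). A i \<and> X R p \<and> \<not> (A j \<and> X R (p+1))}"
    unfolding D contrib_def cl_def Let_def using assms(2,7-9) by (auto split: if_splits)
  have e2: "{AX. Dsum K h R (cl R AX) i j = -1} = {(A, X). A j \<and> X R (p+1) \<and> \<not> (A i \<and> X R p)}"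
    unfolding D contrib_def cl_def Let_def using assms(2,7-9) by (auto split: if_splits)
  show "G K \<alpha> PX h R i j 1 = \<alpha> i * (1 - \<alpha> j) * measure_pmf.prob PX {X. X R p \<and> X R (p+1)}
            + \<alpha> i * measure_pmf.prob PX {X. X R p \<and> \<not> X R (p+1)}"
    unfolding e1 by (rule click_prob) (use assms in auto)
  show "G K \<alpha> PX h R i j (-1) = \<alpha> j * (1 - \<alpha> i) * measure_pmf.prob PX {X. X R (p+1) \<and> X R p}
            + \<alpha> j * measure_pmf.prob PX {X. X R (p+1) \<and> \<not> X R p}"
    unfolding e2 by (rule click_prob) (use assms in auto)
qed

lemma G_formula2:
  assumes "is_list K R" "i \<noteq> j" "i < K" "j < K" "m0 < (K - h) div 2" "2 * ((K - h) div 2) + h \<le> K"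
    and "p = 2*m0+h" "R ! p = j" "R ! (p+1) = i"
    and al: "\<And>i. i < K \<Longrightarrow> 0 \<le> \<alpha> i \<and> \<alpha> i \<le> 1"
  shows "G K \<alpha> PX h R i j 1 = \<alpha> i * (1 - \<alpha> j) * measure_pmf.prob PX {X. X R (p+1) \<and> X R p}
            + \<alpha> i * measure_pmf.prob PX {X. X R (p+1) \<and> \<not> X R p}"
    and "G K \<alpha> PX h R i j (-1) = \<alpha> j * (1 - \<alpha> i) * measure_pmf.prob PX {X. X R p \<and> X R (p+1)}
            + \<alpha> j * measure_pmf.prob PX {X. X R p \<and> \<not> X R (p+1)}"
proof -
  have D: "\<And>c. Dsum K h R c i j = contrib h R c i j m0"
    using Dsum_at[OF assms(1,2,5,6)] assms(7-9) by simp
  have e1: "{AX. Dsum K h R (cl R AX) i j = 1} = {(A, X). A i \<and> X R (p+1) \<and> \<not> (A j \<and> X R p)}"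
    unfolding D contrib_def cl_def Let_def using assms(2,7-9) by (auto split: if_splits)
  have e2: "{AX. Dsum K h R (cl R AX) i j = -1} = {(A, X). A j \<and> X R p \<and> \<not> (A i \<and> X R (p+1))}"
    unfolding D contrib_def cl_def Let_def using assms(2,7-9) by (auto split: if_splits)
  show "G K \<alpha> PX h R i j 1 = \<alpha> i * (1 - \<alpha> j) * measure_pmf.prob PX {X. X R (p+1) \<and> X R p}
            + \<alpha> i * measure_pmf.prob PX {X. X R (p+1) \<and> \<not> X R p}"
    unfolding e1 by (rule click_prob) (use assms in auto)
  show "G K \<alpha> PX h R i j (-1) = \<alpha> j * (1 - \<alpha> i) * measure_pmf.prob PX {X. X R p \<and> X R (p+1)}
            + \<alpha> j * measure_pmf.prob PX {X. X R p \<and> \<not> X R (p+1)}"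
    unfolding e2 by (rule click_prob) (use assms in auto)
qed

lemma conj_set_commute: "{X. P X \<and> Q X} = {X. Q X \<and> P X}" by auto

lemma take_swap_pos'[simp]: "take p (swap_pos p (Suc p) R) = take p R"
  by (simp add: swap_pos_def)

lemma PW1:
  assumes A: "assumptions_A1_A5 K \<alpha> PX"
    and "is_list K R" "i < j" "j < K" "m0 < (K - h) div 2" "2 * ((K - h) div 2) + h \<le> K"
    and "p = 2*m0+h" "R ! p = i" "R ! (p+1) = j"
    and al: "\<And>i. i < K \<Longrightarrow> 0 \<le> \<alpha> i \<and> \<alpha> i \<le> 1"
    and aij: "\<alpha> j \<le> \<alpha> i"
  shows "\<alpha> i * G K \<alpha> PX h R i j (-1) \<le> \<alpha> j * G K \<alpha> PX h R i j 1"
proof -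
  have ij: "i \<noteq> j" "i < K" using assms by auto
  note g = G_formula1[OF assms(2) ij(1) ij(2) assms(4-9) al]
  define a where "a = \<alpha> i"
  define b where "b = \<alpha> j"
  define J where "J = measure_pmf.prob PX {X. X R p \<and> X R (p+1)}"
  define x1 where "x1 = measure_pmf.prob PX {X. X R p \<and> \<not> X R (p+1)}"
  define y1 where "y1 = measure_pmf.prob PX {X. X R (p+1) \<and> \<not> X R p}"
  have pK: "p + 1 < K" using assms(5,6,7) by linarith
  have uv: "chi PX R (p+1) \<le> chi PX R p" using A3'[OF A assms(2), of p "p+1"] pK by simp
  have u: "chi PX R p = J + x1" unfolding chi_def J_def x1_def by (rule prob_split)
  have v: "chi PX R (p+1) = J + y1" unfolding chi_def J_def y1_def
    by (subst conj_set_commute) (rule prob_split)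
  have J0: "0 \<le> J" unfolding J_def by simp
  have ab: "0 \<le> a" "0 \<le> b" "b \<le> a" using al[of i] al[of j] ij assms(4) aij by (auto simp: a_def b_def)
  have Jc: "{X. X R (p+1) \<and> X R p} = {X. X R p \<and> X R (p+1)}" by auto
  have gm: "G K \<alpha> PX h R i j (-1) = b * (1 - a) * J + b * y1"
    using g(2) unfolding Jc a_def b_def J_def y1_def .
  have "\<alpha> i * G K \<alpha> PX h R i j (-1) = a * b * ((1 - a) * J + y1)"
    unfolding gm by (simp add: a_def algebra_simps)
  also have "\<dots> \<le> a * b * ((1 - b) * J + x1)"
  proof (rule mult_left_mono)
    have "(a - b) * J \<ge> 0" using ab J0 by simp
    then show "(1 - a) * J + y1 \<le> (1 - b) * J + x1" using u v uv by (simp add: algebra_simps)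
  qed (use ab in simp)
  also have "\<dots> = \<alpha> j * G K \<alpha> PX h R i j 1"
  proof -
    have gp: "G K \<alpha> PX h R i j 1 = a * (1 - b) * J + a * x1"
      using g(1) unfolding a_def b_def J_def x1_def .
    show ?thesis unfolding gp by (simp add: b_def algebra_simps)
  qed
  finally show ?thesis .
qed

lemma PW2:
  assumes A: "assumptions_A1_A5 K \<alpha> PX"
    and "is_list K R" "i < j" "j < K" "m0 < (K - h) div 2" "2 * ((K - h) div 2) + h \<le> K"
    and "p = 2*m0+h" "R ! p = i" "R ! (p+1) = j"
    and al: "\<And>i. i < K \<Longrightarrow> 0 \<le> \<alpha> i \<and> \<alpha> i \<le> 1"
    and aij: "\<alpha> j \<le> \<alpha> i"
  shows "\<alpha> i * (G K \<alpha> PX h R i j (-1) + G K \<alpha> PX h (swap_pos p (p+1) R) i j (-1))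
       \<le> \<alpha> j * (G K \<alpha> PX h R i j 1 + G K \<alpha> PX h (swap_pos p (p+1) R) i j 1)"
proof -
  have ij: "i \<noteq> j" "i < K" using assms by auto
  have pK: "p + 1 < K" using assms(5,6,7) by linarith
  have len: "length R = K" using assms(2) by (rule is_list_length)
  define R' where "R' = swap_pos p (p+1) R"
  have R'l: "is_list K R'" unfolding R'_def using is_list_swap_pos[OF assms(2)] pK by simp
  have R'p: "R' ! p = j" "R' ! (p+1) = i" unfolding R'_def using assms(8,9) pK len
    by (auto simp: nth_swap_pos)
  note g = G_formula1[OF assms(2) ij(1) ij(2) assms(4-9) al]
  note g' = G_formula2[OF R'l ij(1) ij(2) assms(4-7) R'p al]
  define a where "a = \<alpha> i"
  define b where "b = \<alpha> j"
  define J where "J = measure_pmf.prob PX {X. X R p \<and> X R (p+1)}"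
  define x1 where "x1 = measure_pmf.prob PX {X. X R p \<and> \<not> X R (p+1)}"
  define y1 where "y1 = measure_pmf.prob PX {X. X R (p+1) \<and> \<not> X R p}"
  define J' where "J' = measure_pmf.prob PX {X. X R' p \<and> X R' (p+1)}"
  define x2 where "x2 = measure_pmf.prob PX {X. X R' p \<and> \<not> X R' (p+1)}"
  define y2 where "y2 = measure_pmf.prob PX {X. X R' (p+1) \<and> \<not> X R' p}"
  have u: "chi PX R p = J + x1" unfolding chi_def J_def x1_def by (rule prob_split)
  have v: "chi PX R (p+1) = J + y1" unfolding chi_def J_def y1_def
    by (subst conj_set_commute) (rule prob_split)
  have u': "chi PX R' p = J' + x2" unfolding chi_def J'_def x2_def by (rule prob_split)
  have v': "chi PX R' (p+1) = J' + y2" unfolding chi_def J'_def y2_def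
    by (subst conj_set_commute) (rule prob_split)
  have uu: "chi PX R p = chi PX R' p"
    by (rule A2'[OF A assms(2) R'l]) (use pK in \<open>auto simp: R'_def take_swap_pos\<close>)
  have "swap_pos p (p+1) R' = R" unfolding R'_def by (rule swap_pos_invol) (use pK len in simp)
  moreover have "chi PX (swap_pos p (p+1) R') (p+1) \<le> chi PX R' (p+1)"
    by (rule A4'[OF A R'l]) (use pK R'p aij in auto)
  ultimately have vv: "chi PX R (p+1) \<le> chi PX R' (p+1)" by simp
  have J0: "0 \<le> J" "0 \<le> J'" unfolding J_def J'_def by simp_all
  have ab: "0 \<le> a" "0 \<le> b" "b \<le> a" using al[of i] al[of j] ij assms(4) aij by (auto simp: a_def b_def)
  have Jc: "{X. X R (p+1) \<and> X R p} = {X. X R p \<and> X R (p+1)}" by auto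
  have Jc': "{X. X R' (p+1) \<and> X R' p} = {X. X R' p \<and> X R' (p+1)}" by auto
  have g1: "G K \<alpha> PX h R i j 1 = a * (1 - b) * J + a * x1"
    using g(1) unfolding a_def b_def J_def x1_def .
  have g2: "G K \<alpha> PX h R i j (-1) = b * (1 - a) * J + b * y1"
    using g(2) unfolding Jc a_def b_def J_def y1_def .
  have g3: "G K \<alpha> PX h R' i j 1 = a * (1 - b) * J' + a * y2"
    using g'(1) unfolding Jc' a_def b_def J'_def y2_def .
  have g4: "G K \<alpha> PX h R' i j (-1) = b * (1 - a) * J' + b * x2"
    using g'(2) unfolding a_def b_def J'_def x2_def .
  have "\<alpha> i * (G K \<alpha> PX h R i j (-1) + G K \<alpha> PX h R' i j (-1)) =
        a * b * ((1 - a) * J + y1 + (1 - a) * J' + x2)"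
    unfolding g2 g4 by (simp add: a_def algebra_simps)
  also have "\<dots> \<le> a * b * ((1 - b) * J + x1 + (1 - b) * J' + y2)"
  proof (rule mult_left_mono)
    have "(a - b) * (J + J') \<ge> 0" using ab J0 by simp
    then show "(1 - a) * J + y1 + (1 - a) * J' + x2 \<le> (1 - b) * J + x1 + (1 - b) * J' + y2"
      using u v u' v' uu vv by (simp add: algebra_simps)
  qed (use ab in simp)
  also have "\<dots> = \<alpha> j * (G K \<alpha> PX h R i j 1 + G K \<alpha> PX h R' i j 1)"
    unfolding g1 g3 by (simp add: b_def algebra_simps)
  finally show ?thesis unfolding R'_def .
qed

lemma step_emeasure:
  assumes "is_list K Rb" "i \<noteq> j" "i < K" "j < K"
  shows "emeasure (br_step K \<delta> (env K \<alpha> PX) t (Rb, s, n)) {st'. fst (snd st') i j = s i j + v} =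
    (\<integral>\<^sup>+R. ennreal (G K \<alpha> PX (t mod 2) R i j v) \<partial>rand_pairs \<delta> (t mod 2) s n Rb ((K - t mod 2) div 2))"
proof -
  define h where "h = t mod 2"
  define M where "M = (K - h) div 2"
  have lenRb: "length Rb = K" using assms(1) by (rule is_list_length)
  have MK: "2 * M + h \<le> K" unfolding M_def using M_bound[OF assms(3)] by (simp add: h_def)
  have "emeasure (br_step K \<delta> (env K \<alpha> PX) t (Rb, s, n)) {st'. fst (snd st') i j = s i j + v} =
    (\<integral>\<^sup>+R. emeasure (env K \<alpha> PX) (nxt K \<delta> h Rb s n R -` {st'. fst (snd st') i j = s i j + v})
       \<partial>rand_pairs \<delta> h s n Rb M)"
    unfolding br_step_eq h_def M_def by simp
  also have "\<dots> = (\<integral>\<^sup>+R. ennreal (G K \<alpha> PX h R i j v) \<partial>rand_pairs \<delta> h s n Rb M)"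
  proof (intro nn_integral_cong_AE AE_pmfI)
    fix R assume "R \<in> set_pmf (rand_pairs \<delta> h s n Rb M)"
    have "nxt K \<delta> h Rb s n R -` {st'. fst (snd st') i j = s i j + v} = {AX. Dsum K h R (cl R AX) i j = v}"
      using nxt_entry[OF assms(2), of K \<delta> h Rb s n R] by auto
    then show "emeasure (env K \<alpha> PX) (nxt K \<delta> h Rb s n R -` {st'. fst (snd st') i j = s i j + v}) =
         ennreal (G K \<alpha> PX h R i j v)"
      by (simp add: measure_pmf.emeasure_eq_measure)
  qed
  finally show ?thesis unfolding h_def M_def .
qed

definition pairP :: "nat list \<Rightarrow> nat \<Rightarrow> nat \<Rightarrow> nat \<Rightarrow> nat \<Rightarrow> bool" where
  "pairP R h i j m = ((R ! (2*m+h) = i \<and> R ! (2*m+h+1) = j) \<or> (R ! (2*m+h) = j \<and> R ! (2*m+h+1) = i))"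

lemma step_prob:
  assumes A: "assumptions_A1_A5 K \<alpha> PX" and al: "\<And>i. i < K \<Longrightarrow> 0 \<le> \<alpha> i \<and> \<alpha> i \<le> 1"
    and ij: "i < j" "j < K" "\<alpha> j \<le> \<alpha> i" and Rb: "is_list K Rb"
    and good: "real_of_int (s j i) \<le> thr \<delta> (n j i)"
  shows "\<alpha> i * measure_pmf.prob (br_step K \<delta> (env K \<alpha> PX) t (Rb, s, n)) {st'. fst (snd st') i j = s i j - 1}
       \<le> \<alpha> j * measure_pmf.prob (br_step K \<delta> (env K \<alpha> PX) t (Rb, s, n)) {st'. fst (snd st') i j = s i j + 1}"
proof -
  define h where "h = t mod 2"
  define M where "M = (K - h) div 2"
  define rnd where "rnd = rand_pairs \<delta> h s n Rb M"
  define Q where "Q = br_step K \<delta> (env K \<alpha> PX) t (Rb, s, n)"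
  have ineq: "i \<noteq> j" "i < K" using ij by auto
  have lenRb: "length Rb = K" using Rb by (rule is_list_length)
  have MK: "2 * M + h \<le> K" unfolding M_def using M_bound[OF ineq(2)] by (simp add: h_def)
  have MK': "2 * ((K - h) div 2) + h \<le> K" using MK by (simp add: M_def)
  have supp: "length R = length Rb \<and>
    (\<forall>m<M. (R ! (2*m+h) = Rb ! (2*m+h) \<and> R ! (2*m+h+1) = Rb ! (2*m+h+1)) \<or>
            (R ! (2*m+h) = Rb ! (2*m+h+1) \<and> R ! (2*m+h+1) = Rb ! (2*m+h) \<and>
             cond_rp \<delta> s n (Rb ! (2*m+h)) (Rb ! (2*m+h+1)))) \<and> is_list K R"
    if "R \<in> set_pmf rnd" for R
    using rp_support[OF that[unfolded rnd_def]] MK lenRb Rb by auto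
  have em: "\<And>v. emeasure Q {st'. fst (snd st') i j = s i j + v} = (\<integral>\<^sup>+R. ennreal (G K \<alpha> PX h R i j v) \<partial>rnd)"
    unfolding Q_def rnd_def h_def M_def by (rule step_emeasure[OF Rb ineq(1,2) ij(2)])
  have ai: "0 \<le> \<alpha> i" "0 \<le> \<alpha> j" using al ij ineq by auto
  have key: "(\<integral>\<^sup>+R. ennreal (\<alpha> i * G K \<alpha> PX h R i j (-1)) \<partial>rnd) \<le> (\<integral>\<^sup>+R. ennreal (\<alpha> j * G K \<alpha> PX h R i j 1) \<partial>rnd)"
  proof (cases "\<exists>m0<M. pairP Rb h i j m0")
    case False
    have "(\<integral>\<^sup>+R. ennreal (\<alpha> i * G K \<alpha> PX h R i j (-1)) \<partial>rnd) = (\<integral>\<^sup>+R. 0 \<partial>rnd)"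
    proof (intro nn_integral_cong_AE AE_pmfI)
      fix R assume R: "R \<in> set_pmf rnd"
      have "\<forall>m<M. \<not> pairP R h i j m" using supp[OF R] False unfolding pairP_def by metis
      then have "\<And>c. Dsum K h R c i j = 0" unfolding Dsum_def M_def pairP_def
        by (intro contrib_sum_none) auto
      then show "ennreal (\<alpha> i * G K \<alpha> PX h R i j (-1)) = 0" by simp
    qed
    then show ?thesis by simp
  next
    case True
    then obtain m0 where m0: "m0 < M" "pairP Rb h i j m0" by blast
    define p where "p = 2 * m0 + h"
    have pK: "p + 1 < K" using m0 MK by (simp add: p_def)
    show ?thesis
    proof (cases "cond_rp \<delta> s n (Rb ! p) (Rb ! (p+1))")
      case False
      have Rbp: "Rb ! p = i" "Rb ! (p+1) = j"
        using m0(2) False good unfolding pairP_def p_def by auto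
      show ?thesis
      proof (intro nn_integral_mono_AE AE_pmfI ennreal_leI)
        fix R assume R: "R \<in> set_pmf rnd"
        have Rp: "R ! p = i" "R ! (p+1) = j" using supp[OF R] m0(1) False Rbp
          unfolding p_def by auto
        show "\<alpha> i * G K \<alpha> PX h R i j (-1) \<le> \<alpha> j * G K \<alpha> PX h R i j 1"
          by (rule PW1[OF A _ ij(1,2) _ MK' p_def Rp al ij(3)])
             (use supp[OF R] m0(1) in \<open>auto simp: M_def\<close>)
      qed
    next
      case True
      define sw :: "nat list \<Rightarrow> nat list" where "sw = swap_pos p (p+1)"
      have sym: "map_pmf sw rnd = rnd"
        unfolding sw_def rnd_def p_def using rp_sym[OF m0(1)] MK lenRb True
        by (simp add: p_def)
      have swi: "\<And>f. (\<integral>\<^sup>+R. f R \<partial>rnd) = (\<integral>\<^sup>+R. f (sw R) \<partial>rnd)"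
      proof -
        fix f :: "nat list \<Rightarrow> ennreal"
        have "(\<integral>\<^sup>+R. f R \<partial>rnd) = (\<integral>\<^sup>+R. f R \<partial>map_pmf sw rnd)" using sym by simp
        also have "\<dots> = (\<integral>\<^sup>+R. f (sw R) \<partial>rnd)" by simp
        finally show "(\<integral>\<^sup>+R. f R \<partial>rnd) = (\<integral>\<^sup>+R. f (sw R) \<partial>rnd)" .
      qed
      define F where "F = (\<lambda>R. ennreal (\<alpha> i * G K \<alpha> PX h R i j (-1)))"
      define H where "H = (\<lambda>R. ennreal (\<alpha> j * G K \<alpha> PX h R i j 1))"
      have pw: "F R + F (sw R) \<le> H R + H (sw R)" if R: "R \<in> set_pmf rnd" for R
      proof -
        have Rl: "is_list K R" using supp[OF R] by simp
        have lenR: "length R = K" using Rl by (rule is_list_length)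
        have pr: "(R ! p = i \<and> R ! (p+1) = j) \<or> (R ! p = j \<and> R ! (p+1) = i)"
          using supp[OF R] m0 unfolding pairP_def p_def by auto
        have real: "\<alpha> i * (G K \<alpha> PX h R i j (-1) + G K \<alpha> PX h (sw R) i j (-1))
                  \<le> \<alpha> j * (G K \<alpha> PX h R i j 1 + G K \<alpha> PX h (sw R) i j 1)"
        proof (cases "R ! p = i \<and> R ! (p+1) = j")
          case True
          show ?thesis unfolding sw_def
            by (rule PW2[OF A Rl ij(1,2) _ MK' p_def _ _ al ij(3)])
               (use True m0(1) in \<open>auto simp: M_def\<close>)
        next
          case False
          then have Rp: "R ! p = j" "R ! (p+1) = i" using pr by auto
          have R'l: "is_list K (sw R)" unfolding sw_def using is_list_swap_pos[OF Rl] pK by simp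
          have R'p: "sw R ! p = i" "sw R ! (p+1) = j" unfolding sw_def using Rp pK lenR
            by (auto simp: nth_swap_pos)
          have inv: "sw (sw R) = R" unfolding sw_def by (rule swap_pos_invol) (use pK lenR in simp)
          have "\<alpha> i * (G K \<alpha> PX h (sw R) i j (-1) + G K \<alpha> PX h (sw (sw R)) i j (-1))
                  \<le> \<alpha> j * (G K \<alpha> PX h (sw R) i j 1 + G K \<alpha> PX h (sw (sw R)) i j 1)"
            unfolding sw_def
            by (rule PW2[OF A _ ij(1,2) _ MK' p_def _ _ al ij(3)])
               (use R'l R'p m0(1) in \<open>auto simp: M_def sw_def\<close>)
          then show ?thesis unfolding inv by (simp add: add.commute)
        qed
        have "F R + F (sw R) = ennreal (\<alpha> i * (G K \<alpha> PX h R i j (-1) + G K \<alpha> PX h (sw R) i j (-1)))"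
          unfolding F_def using ai by (simp add: ennreal_plus[symmetric] distrib_left del: ennreal_plus)
        also have "\<dots> \<le> ennreal (\<alpha> j * (G K \<alpha> PX h R i j 1 + G K \<alpha> PX h (sw R) i j 1))"
          using real by (rule ennreal_leI)
        also have "\<dots> = H R + H (sw R)"
          unfolding H_def using ai by (simp add: ennreal_plus[symmetric] distrib_left del: ennreal_plus)
        finally show ?thesis .
      qed
      have "2 * (\<integral>\<^sup>+R. F R \<partial>rnd) = (\<integral>\<^sup>+R. F R \<partial>rnd) + (\<integral>\<^sup>+R. F (sw R) \<partial>rnd)"
        using swi[of F] by (simp add: mult_2)
      also have "\<dots> = (\<integral>\<^sup>+R. F R + F (sw R) \<partial>rnd)"
        by (rule nn_integral_add[symmetric]) auto
      also have "\<dots> \<le> (\<integral>\<^sup>+R. H R + H (sw R) \<partial>rnd)"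
        by (intro nn_integral_mono_AE AE_pmfI pw)
      also have "\<dots> = (\<integral>\<^sup>+R. H R \<partial>rnd) + (\<integral>\<^sup>+R. H (sw R) \<partial>rnd)"
        by (rule nn_integral_add) auto
      also have "\<dots> = 2 * (\<integral>\<^sup>+R. H R \<partial>rnd)"
        using swi[of H] by (simp add: mult_2)
      finally have "2 * (\<integral>\<^sup>+R. F R \<partial>rnd) \<le> 2 * (\<integral>\<^sup>+R. H R \<partial>rnd)" .
      then show ?thesis unfolding F_def H_def
        by (subst (asm) ennreal_mult_le_mult_iff) auto
    qed
  qed
  have "ennreal (\<alpha> i * measure_pmf.prob Q {st'. fst (snd st') i j = s i j - 1}) =
        ennreal (\<alpha> i) * emeasure Q {st'. fst (snd st') i j = s i j + (-1)}"
    using ai by (simp add: ennreal_mult measure_pmf.emeasure_eq_measure)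
  also have "\<dots> = (\<integral>\<^sup>+R. ennreal (\<alpha> i * G K \<alpha> PX h R i j (-1)) \<partial>rnd)"
    unfolding em using ai by (simp add: nn_integral_cmult[symmetric] ennreal_mult)
  also have "\<dots> \<le> (\<integral>\<^sup>+R. ennreal (\<alpha> j * G K \<alpha> PX h R i j 1) \<partial>rnd)" by (rule key)
  also have "\<dots> = ennreal (\<alpha> j) * emeasure Q {st'. fst (snd st') i j = s i j + 1}"
    unfolding em using ai by (simp add: nn_integral_cmult[symmetric] ennreal_mult)
  also have "\<dots> = ennreal (\<alpha> j * measure_pmf.prob Q {st'. fst (snd st') i j = s i j + 1})"
    using ai by (simp add: ennreal_mult measure_pmf.emeasure_eq_measure)
  finally show ?thesis unfolding Q_def using ai by (simp add: ennreal_le_iff)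
qed

lemma hoeff_two:
  fixes a b l :: real
  assumes "0 < b" "b \<le> a" "0 \<le> l"
  defines "\<mu> \<equiv> (a - b) / (a + b)"
  shows "a * exp (-l * (1 - \<mu>) - l^2/2) + b * exp (l * (1 + \<mu>) - l^2/2) \<le> a + b"
proof -
  define p where "p = b / (a + b)"
  have ab: "0 < a + b" using assms by simp
  have p0: "0 \<le> p" using assms by (simp add: p_def)
  have m1: "1 - \<mu> = 2 * p" unfolding \<mu>_def p_def using ab by (simp add: field_simps)
  have m2: "1 + \<mu> = 2 - 2 * p" using m1 by simp
  have H: "-(2*l) * p + ln (1 + p * (exp (2*l) - 1)) \<le> (2*l)^2 / 8"
    using Hoeffdings_lemma_aux[of "2*l" p] assms(3) p0 by simp
  have pos: "0 < 1 + p * (exp (2*l) - 1)"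
  proof -
    have "0 \<le> p * (exp (2*l) - 1)" using p0 assms(3) by simp
    then show ?thesis by simp
  qed
  have "ln (1 + p * (exp (2*l) - 1)) \<le> 2*l*p + l^2/2" using H by (simp add: power2_eq_square)
  then have H2: "1 + p * (exp (2*l) - 1) \<le> exp (2*l*p + l^2/2)"
    using pos by (metis exp_le_cancel_iff exp_ln)
  have eq1: "a + b * exp (2*l) = (a + b) * (1 + p * (exp (2*l) - 1))"
    unfolding p_def using ab by (simp add: field_simps)
  have "a * exp (-l * (1 - \<mu>) - l^2/2) + b * exp (l * (1 + \<mu>) - l^2/2)
      = (a + b * exp (2*l)) * exp (-(2*l*p + l^2/2))"
  proof -
    have e0: "exp (-l * (2 * p) - l^2/2) = exp (-(2*l*p + l^2/2))"
      by (rule arg_cong[where f=exp]) (simp add: algebra_simps)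
    have "exp (2*l) * exp (-(2*l*p + l^2/2)) = exp (2*l + -(2*l*p + l^2/2))"
      by (rule exp_add[symmetric])
    also have "2*l + -(2*l*p + l^2/2) = l * (2 - 2 * p) - l^2/2" by (simp add: algebra_simps)
    finally have e1: "exp (l * (2 - 2 * p) - l^2/2) = exp (2*l) * exp (-(2*l*p + l^2/2))" by simp
    show ?thesis unfolding m1 m2 e0 e1 by (simp add: algebra_simps)
  qed
  also have "\<dots> \<le> (a + b) * exp (2*l*p + l^2/2) * exp (-(2*l*p + l^2/2))"
    unfolding eq1 using H2 ab by (intro mult_right_mono) auto
  also have "\<dots> = a + b" by (simp add: exp_minus field_simps)
  finally show ?thesis .
qed

definition phi :: "real \<Rightarrow> real \<Rightarrow> real \<Rightarrow> int \<Rightarrow> real" where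
  "phi l \<mu> c d = exp (- l * real_of_int d + (l * \<mu> - c) * real_of_int \<bar>d\<bar>)"

lemma real_bound:
  fixes a b gp gm Pp Pm P0 :: real
  assumes "0 < a" "0 \<le> b" "a * gp + b * gm \<le> a + b" "gp \<le> 1" "0 \<le> Pp" "0 \<le> Pm" "0 \<le> P0"
    "a * Pm \<le> b * Pp" "P0 + Pp + Pm \<le> 1"
  shows "gp * Pp + gm * Pm + P0 \<le> 1"
proof (cases "gm \<le> 1")
  case True
  have "0 \<le> (1 - gp) * Pp" using assms(4,5) by simp
  then have "gp * Pp \<le> Pp" by (simp add: algebra_simps)
  moreover have "0 \<le> (1 - gm) * Pm" using True assms(6) by simp
  then have "gm * Pm \<le> Pm" by (simp add: algebra_simps)
  ultimately show ?thesis using assms(9) by linarith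
next
  case False
  have "(gm - 1) * (a * Pm) \<le> (gm - 1) * (b * Pp)" using False assms(8) by (intro mult_left_mono) auto
  then have "a * ((gp - 1) * Pp + (gm - 1) * Pm) \<le> Pp * (a * gp + b * gm - a - b)"
    by (simp add: algebra_simps)
  also have "\<dots> \<le> 0" using assms(3,5) by (intro mult_nonneg_nonpos) auto
  finally have "(gp - 1) * Pp + (gm - 1) * Pm \<le> 0" using assms(1)
    by (simp add: mult_le_0_iff)
  then show ?thesis using assms(9) by (simp add: algebra_simps)
qed

lemma step_phi:
  assumes A: "assumptions_A1_A5 K \<alpha> PX" and al: "\<And>i. i < K \<Longrightarrow> 0 < \<alpha> i \<and> \<alpha> i \<le> 1"
    and ij: "i < j" "j < K" "\<alpha> j \<le> \<alpha> i" and Rb: "is_list K Rb"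
    and good: "real_of_int (s j i) \<le> thr \<delta> (n j i)" and l: "0 \<le> l"
  defines "\<mu> \<equiv> (\<alpha> i - \<alpha> j) / (\<alpha> i + \<alpha> j)"
  shows "(\<integral>\<^sup>+st'. ennreal (phi l \<mu> (l^2/2) (fst (snd st') i j - s i j)) \<partial>br_step K \<delta> (env K \<alpha> PX) t (Rb, s, n)) \<le> 1"
proof -
  define Q where "Q = br_step K \<delta> (env K \<alpha> PX) t (Rb, s, n)"
  define S :: "int \<Rightarrow> state set" where "S = (\<lambda>v. {st'. fst (snd st') i j = s i j + v})"
  define gp where "gp = exp (-l * (1 - \<mu>) - l^2/2)"
  define gm where "gm = exp (l * (1 + \<mu>) - l^2/2)"
  have ineq: "i \<noteq> j" "i < K" using ij by auto
  have a0: "0 < \<alpha> i" "0 < \<alpha> j" using al ij ineq by auto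
  have al': "\<And>i. i < K \<Longrightarrow> 0 \<le> \<alpha> i \<and> \<alpha> i \<le> 1" using al by (simp add: less_imp_le)
  have "(\<integral>\<^sup>+st'. ennreal (phi l \<mu> (l^2/2) (fst (snd st') i j - s i j)) \<partial>Q) =
        (\<integral>\<^sup>+st'. ennreal gp * indicator (S 1) st' + ennreal gm * indicator (S (-1)) st' + indicator (S 0) st' \<partial>Q)"
  proof (intro nn_integral_cong_AE AE_pmfI)
    fix st' assume "st' \<in> set_pmf Q"
    then obtain d :: int where d: "d \<in> {-1,0,1}" "fst (snd st') i j = s i j + d"
      using step_support[OF Rb ineq(1,2) ij(2)] unfolding Q_def by (metis snd_conv)
    show "ennreal (phi l \<mu> (l^2/2) (fst (snd st') i j - s i j)) =
        ennreal gp * indicator (S 1) st' + ennreal gm * indicator (S (-1)) st' + indicator (S 0) st'"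
      using d by (auto simp: S_def phi_def gp_def gm_def algebra_simps)
  qed
  also have "\<dots> = ennreal gp * emeasure Q (S 1) + ennreal gm * emeasure Q (S (-1)) + emeasure Q (S 0)"
    by (simp add: nn_integral_add nn_integral_cmult_indicator)
  also have "\<dots> = ennreal (gp * measure Q (S 1) + gm * measure Q (S (-1)) + measure Q (S 0))"
    by (simp add: measure_pmf.emeasure_eq_measure gp_def gm_def ennreal_mult ennreal_plus)
  also have "\<dots> \<le> ennreal 1"
  proof (rule ennreal_leI, rule real_bound[of "\<alpha> i" "\<alpha> j"])
    show "0 < \<alpha> i" "0 \<le> \<alpha> j" using a0 by auto
    show "\<alpha> i * gp + \<alpha> j * gm \<le> \<alpha> i + \<alpha> j"
      unfolding gp_def gm_def \<mu>_def by (rule hoeff_two) (use a0 ij l in auto)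
    show "gp \<le> 1" unfolding gp_def
    proof -
      have "\<mu> \<le> 1" unfolding \<mu>_def using a0 by (simp add: divide_le_eq_1)
      then have "0 \<le> l * (1 - \<mu>)" using l by simp
      moreover have "0 \<le> l^2" by simp
      ultimately have "-l * (1 - \<mu>) - l^2/2 \<le> 0" by linarith
      then show "exp (-l * (1 - \<mu>) - l^2/2) \<le> 1" by simp
    qed
    show "0 \<le> measure Q (S 1)" "0 \<le> measure Q (S (-1))" "0 \<le> measure Q (S 0)" by simp_all
    show "\<alpha> i * measure Q (S (-1)) \<le> \<alpha> j * measure Q (S 1)"
      using step_prob[where K=K and \<alpha>=\<alpha> and PX=PX and i=i and j=j and Rb=Rb and s=s and n=n and \<delta>=\<delta> and t=t, OF A al' ij Rb good] unfolding Q_def S_def by simp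
    have "measure Q (S 0) + measure Q (S 1) + measure Q (S (-1)) = measure Q (S 0 \<union> S 1 \<union> S (-1))"
      by (subst measure_pmf.finite_measure_Union, simp, simp, force simp: S_def)
         (subst measure_pmf.finite_measure_Union, auto simp: S_def)
    then show "measure Q (S 0) + measure Q (S 1) + measure Q (S (-1)) \<le> 1"
      by (metis measure_pmf.prob_le_1)
  qed
  finally show ?thesis unfolding Q_def by simp
qed

definition cur :: "nat list \<Rightarrow> state list \<Rightarrow> state" where
  "cur R0 xs = (if xs = [] then init_state R0 else last xs)"

lemma traj_Suc: "traj K \<delta> E R0 (Suc t) =
  bind_pmf (traj K \<delta> E R0 t) (\<lambda>xs. map_pmf (\<lambda>st'. xs @ [st']) (br_step K \<delta> E (Suc t) (cur R0 xs)))"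
  by (simp add: cur_def)

declare traj.simps(2)[simp del]

lemma traj_len: "xs \<in> set_pmf (traj K \<delta> E R0 T) \<Longrightarrow> length xs = T"
  by (induction T arbitrary: xs) (auto simp: traj_Suc)

lemma traj_take: "t \<le> T \<Longrightarrow> map_pmf (take t) (traj K \<delta> E R0 T) = traj K \<delta> E R0 t"
proof (induction T)
  case 0
  then show ?case by simp
next
  case (Suc T)
  show ?case
  proof (cases "t = Suc T")
    case True
    have "map_pmf (take t) (traj K \<delta> E R0 (Suc T)) = map_pmf id (traj K \<delta> E R0 (Suc T))"
      by (intro map_pmf_cong) (auto dest: traj_len simp: True)
    then show ?thesis using True by simp
  next
    case False
    then have tT: "t \<le> T" using Suc.prems by simp
    have "map_pmf (take t) (traj K \<delta> E R0 (Suc T)) =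
        bind_pmf (traj K \<delta> E R0 T) (\<lambda>xs. map_pmf (\<lambda>st'. take t (xs @ [st'])) (br_step K \<delta> E (Suc T) (cur R0 xs)))"
      by (simp add: traj_Suc map_bind_pmf pmf.map_comp o_def)
    also have "\<dots> = bind_pmf (traj K \<delta> E R0 T) (\<lambda>xs. return_pmf (take t xs))"
    proof (intro bind_pmf_cong refl)
      fix xs assume "xs \<in> set_pmf (traj K \<delta> E R0 T)"
      then have "length xs = T" by (rule traj_len)
      then have "\<And>st'. take t (xs @ [st']) = take t xs" using tT by simp
      then show "map_pmf (\<lambda>st'. take t (xs @ [st'])) (br_step K \<delta> E (Suc T) (cur R0 xs)) = return_pmf (take t xs)"
        by simp
    qed
    also have "\<dots> = map_pmf (take t) (traj K \<delta> E R0 T)" by (simp add: map_pmf_def)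
    also have "\<dots> = traj K \<delta> E R0 t" using Suc.IH tT by simp
    finally show ?thesis .
  qed
qed

lemma step_is_list:
  assumes "is_list K Rb" "st' \<in> set_pmf (br_step K \<delta> E t (Rb, s, n))"
  shows "is_list K (fst st')"
  using assms(2) unfolding br_step_eq nxt_def Let_def by (auto intro!: upd_bar_is_list[OF assms(1)])

lemma cur_is_list:
  assumes "is_list K R0"
  shows "xs \<in> set_pmf (traj K \<delta> E R0 T) \<Longrightarrow> is_list K (fst (cur R0 xs))"
proof (induction T arbitrary: xs)
  case 0
  then show ?case using assms by (simp add: cur_def init_state_def)
next
  case (Suc T)
  then obtain ys st' where ys: "ys \<in> set_pmf (traj K \<delta> E R0 T)" "xs = ys @ [st']"
    "st' \<in> set_pmf (br_step K \<delta> E (Suc T) (cur R0 ys))"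
    by (auto simp: traj_Suc)
  obtain Rb s n where c: "cur R0 ys = (Rb, s, n)" by (metis prod_cases3)
  have "is_list K Rb" using Suc.IH[OF ys(1)] c by simp
  then have "is_list K (fst st')" using step_is_list ys(3) c by metis
  then show ?case using ys by (simp add: cur_def)
qed

lemma traj_nth_cur:
  assumes "xs \<in> set_pmf (traj K \<delta> E R0 T)" "k < T"
  shows "\<exists>ys. ys \<in> set_pmf (traj K \<delta> E R0 (Suc k)) \<and> xs ! k = cur R0 ys"
proof -
  have "take (Suc k) xs \<in> set_pmf (traj K \<delta> E R0 (Suc k))"
    using traj_take[of "Suc k" T K \<delta> E R0] assms by (metis Suc_leI pmf.set_map imageI)
  moreover have "xs ! k = cur R0 (take (Suc k) xs)"
    using assms traj_len[OF assms(1)] by (simp add: cur_def take_Suc_conv_app_nth)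
  ultimately show ?thesis by blast
qed

definition Psi :: "nat list \<Rightarrow> (state \<Rightarrow> bool) \<Rightarrow> (state \<Rightarrow> real) \<Rightarrow> state list \<Rightarrow> real" where
  "Psi R0 Gd W xs = (if \<forall>k < length xs - 1. Gd (xs ! k) then W (cur R0 xs) else 0)"

lemma super:
  assumes R0: "is_list K R0" and Wn: "\<And>st. 0 \<le> W st"
    and G0: "Gd (init_state R0)" and W0: "W (init_state R0) \<le> 1"
    and step: "\<And>t Rb s n. is_list K Rb \<Longrightarrow> Gd (Rb, s, n) \<Longrightarrow>
        (\<integral>\<^sup>+st'. ennreal (W st') \<partial>br_step K \<delta> E t (Rb, s, n)) \<le> ennreal (W (Rb, s, n))"
  shows "(\<integral>\<^sup>+xs. ennreal (Psi R0 Gd W xs) \<partial>traj K \<delta> E R0 T) \<le> 1"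
proof (induction T)
  case 0
  then show ?case using W0 by (simp add: Psi_def cur_def)
next
  case (Suc T)
  have "(\<integral>\<^sup>+xs. ennreal (Psi R0 Gd W xs) \<partial>traj K \<delta> E R0 (Suc T)) =
     (\<integral>\<^sup>+xs. (\<integral>\<^sup>+st'. ennreal (Psi R0 Gd W (xs @ [st'])) \<partial>br_step K \<delta> E (Suc T) (cur R0 xs)) \<partial>traj K \<delta> E R0 T)"
    by (simp add: traj_Suc)
  also have "\<dots> \<le> (\<integral>\<^sup>+xs. ennreal (Psi R0 Gd W xs) \<partial>traj K \<delta> E R0 T)"
  proof (intro nn_integral_mono_AE AE_pmfI)
    fix xs assume xs: "xs \<in> set_pmf (traj K \<delta> E R0 T)"
    have len: "length xs = T" using xs by (rule traj_len)
    obtain Rb s n where c: "cur R0 xs = (Rb, s, n)" by (metis prod_cases3)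
    have Rbl: "is_list K Rb" using cur_is_list[OF R0 xs] c by simp
    show "(\<integral>\<^sup>+st'. ennreal (Psi R0 Gd W (xs @ [st'])) \<partial>br_step K \<delta> E (Suc T) (cur R0 xs)) \<le> ennreal (Psi R0 Gd W xs)"
    proof (cases "\<forall>k<T. Gd (xs ! k)")
      case True
      have Gc: "Gd (cur R0 xs)"
      proof (cases "xs = []")
        case True
        then show ?thesis using G0 by (simp add: cur_def)
      next
        case False
        then have "last xs = xs ! (T - 1)" using len by (simp add: last_conv_nth)
        moreover have "T - 1 < T" using False len by (cases xs) auto
        ultimately show ?thesis using \<open>\<forall>k<T. Gd (xs ! k)\<close> False by (simp add: cur_def)
      qed
      have "\<And>st'. Psi R0 Gd W (xs @ [st']) = W st'"
        using True len by (simp add: Psi_def cur_def nth_append)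
      moreover have "Psi R0 Gd W xs = W (cur R0 xs)" using True len by (simp add: Psi_def)
      ultimately show ?thesis using c step[OF Rbl Gc[unfolded c]] by simp
    next
      case False
      have "\<And>st'. Psi R0 Gd W (xs @ [st']) = 0"
        using False len by (auto simp: Psi_def nth_append)
      then show ?thesis by simp
    qed
  qed
  also have "\<dots> \<le> 1" by (rule Suc.IH)
  finally show ?case .
qed

lemma markov_pmf:
  assumes "\<And>x. x \<in> set_pmf M \<Longrightarrow> x \<in> B \<Longrightarrow> c \<le> f x" "0 < c" "\<And>x. 0 \<le> f x"
    and "(\<integral>\<^sup>+x. ennreal (f x) \<partial>M) \<le> 1"
  shows "measure_pmf.prob M B \<le> 1 / c"
proof -
  have "emeasure M B = (\<integral>\<^sup>+x. indicator B x \<partial>M)" by simp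
  also have "\<dots> \<le> (\<integral>\<^sup>+x. ennreal (1 / c) * ennreal (f x) \<partial>M)"
  proof (intro nn_integral_mono_AE AE_pmfI)
    fix x assume "x \<in> set_pmf M"
    then have "x \<in> B \<Longrightarrow> 1 \<le> (1 / c) * f x" using assms(1,2) by (simp add: field_simps)
    then show "indicator B x \<le> ennreal (1 / c) * ennreal (f x)"
      using assms(2,3) by (auto simp: indicator_def ennreal_mult[symmetric] simp del: ennreal_mult)
  qed
  also have "\<dots> = ennreal (1 / c) * (\<integral>\<^sup>+x. ennreal (f x) \<partial>M)" by (simp add: nn_integral_cmult)
  also have "\<dots> \<le> ennreal (1 / c) * 1" by (intro mult_left_mono assms(4)) auto
  finally have "emeasure M B \<le> ennreal (1 / c)" by simp
  then show ?thesis using assms(2) by (simp add: measure_pmf.emeasure_eq_measure ennreal_le_iff)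
qed

lemma W_step:
  assumes A: "assumptions_A1_A5 K \<alpha> PX" and al: "\<And>i. i < K \<Longrightarrow> 0 < \<alpha> i \<and> \<alpha> i \<le> 1"
    and ij: "i < j" "j < K" "\<alpha> j \<le> \<alpha> i" and Rb: "is_list K Rb"
    and good: "real_of_int (s j i) \<le> thr \<delta> (n j i)" and l: "0 \<le> l"
    and hW: "\<And>st'. st' \<in> set_pmf (br_step K \<delta> (env K \<alpha> PX) t (Rb, s, n)) \<Longrightarrow>
        W st' = W (Rb, s, n) * phi l ((\<alpha> i - \<alpha> j) / (\<alpha> i + \<alpha> j)) (l^2/2) (fst (snd st') i j - s i j)"
    and Wn: "0 \<le> W (Rb, s, n)"
  shows "(\<integral>\<^sup>+st'. ennreal (W st') \<partial>br_step K \<delta> (env K \<alpha> PX) t (Rb, s, n)) \<le> ennreal (W (Rb, s, n))"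
proof -
  define \<mu> where "\<mu> = (\<alpha> i - \<alpha> j) / (\<alpha> i + \<alpha> j)"
  have "(\<integral>\<^sup>+st'. ennreal (W st') \<partial>br_step K \<delta> (env K \<alpha> PX) t (Rb, s, n)) =
      (\<integral>\<^sup>+st'. ennreal (W (Rb, s, n)) * ennreal (phi l \<mu> (l^2/2) (fst (snd st') i j - s i j)) \<partial>br_step K \<delta> (env K \<alpha> PX) t (Rb, s, n))"
    by (intro nn_integral_cong_AE AE_pmfI) (simp add: hW \<mu>_def ennreal_mult Wn phi_def)
  also have "\<dots> = ennreal (W (Rb, s, n)) * (\<integral>\<^sup>+st'. ennreal (phi l \<mu> (l^2/2) (fst (snd st') i j - s i j)) \<partial>br_step K \<delta> (env K \<alpha> PX) t (Rb, s, n))"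
    by (simp add: nn_integral_cmult)
  also have "\<dots> \<le> ennreal (W (Rb, s, n)) * 1"
    by (intro mult_left_mono) (use step_phi[where K=K and \<alpha>=\<alpha> and PX=PX and i=i and j=j and Rb=Rb and s=s and n=n and \<delta>=\<delta> and t=t and l=l, OF A al ij Rb good l] in \<open>auto simp: \<mu>_def\<close>)
  finally show ?thesis by simp
qed

definition W1 :: "real \<Rightarrow> real \<Rightarrow> nat \<Rightarrow> nat \<Rightarrow> state \<Rightarrow> real" where
  "W1 l \<mu> i j st = exp (l * (- real_of_int (fst (snd st) i j) + \<mu> * real (snd (snd st) i j)) - l^2/2 * real (snd (snd st) i j))"

definition W2 :: "real \<Rightarrow> real \<Rightarrow> nat \<Rightarrow> nat \<Rightarrow> state \<Rightarrow> real" where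
  "W2 l \<mu> i j st = exp (l * (real_of_int (fst (snd st) j i) + \<mu> * real (snd (snd st) j i)) - l^2/2 * real (snd (snd st) j i))"

lemma W1_rel:
  assumes "d \<in> {-1,0,1}" "fst (snd st') i j = s i j + d" "snd (snd st') i j = n i j + nat \<bar>d\<bar>"
  shows "W1 l \<mu> i j st' = W1 l \<mu> i j (Rb, s, n) * phi l \<mu> (l^2/2) (fst (snd st') i j - s i j)"
proof -
  have r: "real (nat \<bar>d\<bar>) = real_of_int \<bar>d\<bar>" by simp
  show ?thesis unfolding W1_def phi_def assms(2,3) mult_exp_exp
    by (rule arg_cong[where f=exp]) (simp add: r algebra_simps)
qed

lemma W2_rel:
  assumes "d \<in> {-1,0,1}" "fst (snd st') j i = s j i - d" "snd (snd st') j i = n j i + nat \<bar>d\<bar>"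
    "fst (snd st') i j = s i j + d"
  shows "W2 l \<mu> i j st' = W2 l \<mu> i j (Rb, s, n) * phi l \<mu> (l^2/2) (fst (snd st') i j - s i j)"
proof -
  have r: "real (nat \<bar>d\<bar>) = real_of_int \<bar>d\<bar>" by simp
  show ?thesis unfolding W2_def phi_def assms(2,3,4) mult_exp_exp
    by (rule arg_cong[where f=exp]) (simp add: r algebra_simps)
qed

definition Gd :: "real \<Rightarrow> nat \<Rightarrow> nat \<Rightarrow> state \<Rightarrow> bool" where
  "Gd \<delta> i j st = (real_of_int (fst (snd st) j i) \<le> thr \<delta> (snd (snd st) j i))"

lemma super_W1:
  assumes A: "assumptions_A1_A5 K \<alpha> PX" and al: "\<And>i. i < K \<Longrightarrow> 0 < \<alpha> i \<and> \<alpha> i \<le> 1"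
    and ij: "i < j" "j < K" "\<alpha> j \<le> \<alpha> i" and R0: "is_list K R0" and l: "0 \<le> l"
  shows "(\<integral>\<^sup>+xs. ennreal (Psi R0 (Gd \<delta> i j) (W1 l ((\<alpha> i - \<alpha> j) / (\<alpha> i + \<alpha> j)) i j) xs)
           \<partial>traj K \<delta> (env K \<alpha> PX) R0 T) \<le> 1"
proof (rule super[OF R0])
  show "\<And>st. 0 \<le> W1 l ((\<alpha> i - \<alpha> j) / (\<alpha> i + \<alpha> j)) i j st" by (simp add: W1_def)
  show "Gd \<delta> i j (init_state R0)" by (simp add: Gd_def init_state_def thr_def)
  show "W1 l ((\<alpha> i - \<alpha> j) / (\<alpha> i + \<alpha> j)) i j (init_state R0) \<le> 1" by (simp add: W1_def init_state_def)
  fix t Rb s n assume Rb: "is_list K Rb" and g: "Gd \<delta> i j (Rb, s, n)"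
  show "(\<integral>\<^sup>+st'. ennreal (W1 l ((\<alpha> i - \<alpha> j) / (\<alpha> i + \<alpha> j)) i j st') \<partial>br_step K \<delta> (env K \<alpha> PX) t (Rb, s, n))
        \<le> ennreal (W1 l ((\<alpha> i - \<alpha> j) / (\<alpha> i + \<alpha> j)) i j (Rb, s, n))"
  proof (rule W_step[OF A al ij Rb _ l])
    show "real_of_int (s j i) \<le> thr \<delta> (n j i)" using g by (simp add: Gd_def)
    fix st' assume st': "st' \<in> set_pmf (br_step K \<delta> (env K \<alpha> PX) t (Rb, s, n))"
    obtain d where d: "d \<in> {-1,0,1}" "fst (snd st') i j = s i j + d" "snd (snd st') i j = n i j + nat \<bar>d\<bar>"
      using step_support[OF Rb _ _ ij(2) st'] ij by force
    show "W1 l ((\<alpha> i - \<alpha> j) / (\<alpha> i + \<alpha> j)) i j st' = W1 l ((\<alpha> i - \<alpha> j) / (\<alpha> i + \<alpha> j)) i j (Rb, s, n) *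
        phi l ((\<alpha> i - \<alpha> j) / (\<alpha> i + \<alpha> j)) (l^2/2) (fst (snd st') i j - s i j)"
      by (rule W1_rel[where s=s and n=n and i=i and j=j and st'=st' and d=d, OF d])
  qed (simp_all add: W1_def)
qed

lemma super_W2:
  assumes A: "assumptions_A1_A5 K \<alpha> PX" and al: "\<And>i. i < K \<Longrightarrow> 0 < \<alpha> i \<and> \<alpha> i \<le> 1"
    and ij: "i < j" "j < K" "\<alpha> j \<le> \<alpha> i" and R0: "is_list K R0" and l: "0 \<le> l"
  shows "(\<integral>\<^sup>+xs. ennreal (Psi R0 (Gd \<delta> i j) (W2 l ((\<alpha> i - \<alpha> j) / (\<alpha> i + \<alpha> j)) i j) xs)
           \<partial>traj K \<delta> (env K \<alpha> PX) R0 T) \<le> 1"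
proof (rule super[OF R0])
  show "\<And>st. 0 \<le> W2 l ((\<alpha> i - \<alpha> j) / (\<alpha> i + \<alpha> j)) i j st" by (simp add: W2_def)
  show "Gd \<delta> i j (init_state R0)" by (simp add: Gd_def init_state_def thr_def)
  show "W2 l ((\<alpha> i - \<alpha> j) / (\<alpha> i + \<alpha> j)) i j (init_state R0) \<le> 1" by (simp add: W2_def init_state_def)
  fix t Rb s n assume Rb: "is_list K Rb" and g: "Gd \<delta> i j (Rb, s, n)"
  show "(\<integral>\<^sup>+st'. ennreal (W2 l ((\<alpha> i - \<alpha> j) / (\<alpha> i + \<alpha> j)) i j st') \<partial>br_step K \<delta> (env K \<alpha> PX) t (Rb, s, n))
        \<le> ennreal (W2 l ((\<alpha> i - \<alpha> j) / (\<alpha> i + \<alpha> j)) i j (Rb, s, n))"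
  proof (rule W_step[OF A al ij Rb _ l])
    show "real_of_int (s j i) \<le> thr \<delta> (n j i)" using g by (simp add: Gd_def)
    fix st' assume st': "st' \<in> set_pmf (br_step K \<delta> (env K \<alpha> PX) t (Rb, s, n))"
    obtain d where d: "d \<in> {-1,0,1}" "fst (snd st') i j = s i j + d" "fst (snd st') j i = s j i - d"
       "snd (snd st') j i = n j i + nat \<bar>d\<bar>"
      using step_support[OF Rb _ _ ij(2) st'] ij by force
    show "W2 l ((\<alpha> i - \<alpha> j) / (\<alpha> i + \<alpha> j)) i j st' = W2 l ((\<alpha> i - \<alpha> j) / (\<alpha> i + \<alpha> j)) i j (Rb, s, n) *
        phi l ((\<alpha> i - \<alpha> j) / (\<alpha> i + \<alpha> j)) (l^2/2) (fst (snd st') i j - s i j)"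
      by (rule W2_rel[where s=s and n=n and i=i and j=j and st'=st' and d=d, OF d(1,3,4,2)])
  qed (simp_all add: W2_def)
qed

lemma cnt_inv:
  assumes R0: "is_list K R0" and ij: "i \<noteq> j" "i < K" "j < K"
  shows "ys \<in> set_pmf (traj K \<delta> E R0 T) \<Longrightarrow>
    snd (snd (cur R0 ys)) i j \<le> T \<and> \<bar>fst (snd (cur R0 ys)) i j\<bar> \<le> int (snd (snd (cur R0 ys)) i j) \<and>
    snd (snd (cur R0 ys)) j i \<le> T \<and> \<bar>fst (snd (cur R0 ys)) j i\<bar> \<le> int (snd (snd (cur R0 ys)) j i)"
proof (induction T arbitrary: ys)
  case 0
  then show ?case by (simp add: cur_def init_state_def)
next
  case (Suc T)
  then obtain xs st' where xs: "xs \<in> set_pmf (traj K \<delta> E R0 T)" "ys = xs @ [st']"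
    "st' \<in> set_pmf (br_step K \<delta> E (Suc T) (cur R0 xs))"
    by (auto simp: traj_Suc)
  obtain Rb s n where c: "cur R0 xs = (Rb, s, n)" by (metis prod_cases3)
  have Rb: "is_list K Rb" using cur_is_list[OF R0 xs(1)] c by simp
  have IH: "n i j \<le> T \<and> \<bar>s i j\<bar> \<le> int (n i j) \<and> n j i \<le> T \<and> \<bar>s j i\<bar> \<le> int (n j i)"
    using Suc.IH[OF xs(1)] c by simp
  obtain d :: int where d: "d \<in> {-1,0,1}" "fst (snd st') i j = s i j + d" "fst (snd st') j i = s j i - d"
     "snd (snd st') i j = n i j + nat \<bar>d\<bar>" "snd (snd st') j i = n j i + nat \<bar>d\<bar>"
    using step_support[OF Rb ij, of st' \<delta> E "Suc T" s n] xs(3) c by auto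
  have cy: "cur R0 ys = st'" using xs(2) by (simp add: cur_def)
  show ?case unfolding cy d(2-5) using IH d(1) by auto
qed

lemma expo_bound:
  fixes L m X :: real
  assumes "0 < L" "0 < m" "2 * sqrt (m * L) \<le> X"
  shows "L \<le> sqrt (L / m) * X - (sqrt (L / m))^2 / 2 * m"
proof -
  have lm: "0 \<le> L / m" using assms by (intro divide_nonneg_nonneg) auto
  then have l0: "0 \<le> sqrt (L / m)" by simp
  have "sqrt (L / m * (m * L)) = sqrt (L / m) * sqrt (m * L)" by (rule real_sqrt_mult)
  then have "sqrt (L / m) * (2 * sqrt (m * L)) = 2 * sqrt (L / m * (m * L))" by simp
  also have "L / m * (m * L) = L^2" using assms(2) by (simp add: field_simps power2_eq_square)
  also have "sqrt (L^2) = L" using assms(1) by simp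
  finally have a: "sqrt (L / m) * (2 * sqrt (m * L)) = 2 * L" .
  have b: "(sqrt (L / m))^2 / 2 * m = L / 2" using assms lm by simp
  have "2 * L \<le> sqrt (L / m) * X" using mult_left_mono[OF assms(3) l0] a by simp
  then show ?thesis using b assms(1) by simp
qed

definition E1 :: "real \<Rightarrow> (nat \<Rightarrow> real) \<Rightarrow> nat \<Rightarrow> nat \<Rightarrow> state \<Rightarrow> bool" where
  "E1 \<delta> \<alpha> i j st = ((\<alpha> i - \<alpha> j) / (\<alpha> i + \<alpha> j) * real (snd (snd st) i j) - thr \<delta> (snd (snd st) i j)
      \<le> real_of_int (fst (snd st) i j))"

definition B1 :: "real \<Rightarrow> (nat \<Rightarrow> real) \<Rightarrow> nat list \<Rightarrow> nat \<Rightarrow> nat \<Rightarrow> nat \<Rightarrow> state list set" where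
  "B1 \<delta> \<alpha> R0 i j m = {ys. \<not> E1 \<delta> \<alpha> i j (cur R0 ys) \<and> snd (snd (cur R0 ys)) i j = m \<and>
      (\<forall>k < length ys - 1. Gd \<delta> i j (ys ! k))}"

definition B2 :: "real \<Rightarrow> nat list \<Rightarrow> nat \<Rightarrow> nat \<Rightarrow> nat \<Rightarrow> state list set" where
  "B2 \<delta> R0 i j m = {ys. \<not> Gd \<delta> i j (cur R0 ys) \<and> snd (snd (cur R0 ys)) j i = m \<and>
      (\<forall>k < length ys - 1. Gd \<delta> i j (ys ! k))}"

lemma bad1:
  assumes A: "assumptions_A1_A5 K \<alpha> PX" and al: "\<And>i. i < K \<Longrightarrow> 0 < \<alpha> i \<and> \<alpha> i \<le> 1"
    and ij: "i < j" "j < K" "\<alpha> j \<le> \<alpha> i" and R0: "is_list K R0"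
    and d: "0 < \<delta>" "\<delta> < 1" and m: "0 < m"
  shows "measure_pmf.prob (traj K \<delta> (env K \<alpha> PX) R0 T) (B1 \<delta> \<alpha> R0 i j m) \<le> \<delta>"
proof -
  define L where "L = ln (1 / \<delta>)"
  have L0: "0 < L" unfolding L_def using d by simp
  define l where "l = sqrt (L / real m)"
  have "0 \<le> L / real m" using L0 by (intro divide_nonneg_nonneg) auto
  then have l0: "0 \<le> l" unfolding l_def by simp
  define \<mu> where "\<mu> = (\<alpha> i - \<alpha> j) / (\<alpha> i + \<alpha> j)"
  have "measure_pmf.prob (traj K \<delta> (env K \<alpha> PX) R0 T) (B1 \<delta> \<alpha> R0 i j m) \<le> 1 / (1 / \<delta>)"
  proof (rule markov_pmf[where f = "Psi R0 (Gd \<delta> i j) (W1 l \<mu> i j)"])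
    show "0 < 1 / \<delta>" using d by simp
    show "\<And>x. 0 \<le> Psi R0 (Gd \<delta> i j) (W1 l \<mu> i j) x" by (simp add: Psi_def W1_def)
    show "(\<integral>\<^sup>+x. ennreal (Psi R0 (Gd \<delta> i j) (W1 l \<mu> i j) x) \<partial>traj K \<delta> (env K \<alpha> PX) R0 T) \<le> 1"
      unfolding \<mu>_def by (rule super_W1[OF A al ij R0]) (simp_all add: l0)
    fix ys assume ys: "ys \<in> set_pmf (traj K \<delta> (env K \<alpha> PX) R0 T)" "ys \<in> B1 \<delta> \<alpha> R0 i j m"
    define st where "st = cur R0 ys"
    have nm: "snd (snd st) i j = m" and ne: "\<not> E1 \<delta> \<alpha> i j st"
      and g: "\<forall>k < length ys - 1. Gd \<delta> i j (ys ! k)"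
      using ys(2) by (auto simp: B1_def st_def)
    have X: "2 * sqrt (real m * L) \<le> - real_of_int (fst (snd st) i j) + \<mu> * real m"
      using ne nm unfolding E1_def thr_def L_def \<mu>_def by simp
    have "L \<le> l * (- real_of_int (fst (snd st) i j) + \<mu> * real m) - l^2 / 2 * real m"
      unfolding l_def by (rule expo_bound[OF L0 _ X]) (use m in simp)
    then have "exp L \<le> W1 l \<mu> i j st" unfolding W1_def nm by simp
    moreover have "exp L = 1 / \<delta>" unfolding L_def using d by simp
    moreover have "Psi R0 (Gd \<delta> i j) (W1 l \<mu> i j) ys = W1 l \<mu> i j st"
      using g by (simp add: Psi_def st_def)
    ultimately show "1 / \<delta> \<le> Psi R0 (Gd \<delta> i j) (W1 l \<mu> i j) ys" by simp
  qed
  then show ?thesis by simp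
qed

lemma bad2:
  assumes A: "assumptions_A1_A5 K \<alpha> PX" and al: "\<And>i. i < K \<Longrightarrow> 0 < \<alpha> i \<and> \<alpha> i \<le> 1"
    and ij: "i < j" "j < K" "\<alpha> j \<le> \<alpha> i" and R0: "is_list K R0"
    and d: "0 < \<delta>" "\<delta> < 1" and m: "0 < m"
  shows "measure_pmf.prob (traj K \<delta> (env K \<alpha> PX) R0 T) (B2 \<delta> R0 i j m) \<le> \<delta>"
proof -
  define L where "L = ln (1 / \<delta>)"
  have L0: "0 < L" unfolding L_def using d by simp
  define l where "l = sqrt (L / real m)"
  have "0 \<le> L / real m" using L0 by (intro divide_nonneg_nonneg) auto
  then have l0: "0 \<le> l" unfolding l_def by simp
  define \<mu> where "\<mu> = (\<alpha> i - \<alpha> j) / (\<alpha> i + \<alpha> j)"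
  have mu0: "0 \<le> \<mu>" unfolding \<mu>_def using ij al[of i] al[of j] by simp
  have "measure_pmf.prob (traj K \<delta> (env K \<alpha> PX) R0 T) (B2 \<delta> R0 i j m) \<le> 1 / (1 / \<delta>)"
  proof (rule markov_pmf[where f = "Psi R0 (Gd \<delta> i j) (W2 l \<mu> i j)"])
    show "0 < 1 / \<delta>" using d by simp
    show "\<And>x. 0 \<le> Psi R0 (Gd \<delta> i j) (W2 l \<mu> i j) x" by (simp add: Psi_def W2_def)
    show "(\<integral>\<^sup>+x. ennreal (Psi R0 (Gd \<delta> i j) (W2 l \<mu> i j) x) \<partial>traj K \<delta> (env K \<alpha> PX) R0 T) \<le> 1"
      unfolding \<mu>_def by (rule super_W2[OF A al ij R0]) (simp_all add: l0)
    fix ys assume ys: "ys \<in> set_pmf (traj K \<delta> (env K \<alpha> PX) R0 T)" "ys \<in> B2 \<delta> R0 i j m"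
    define st where "st = cur R0 ys"
    have nm: "snd (snd st) j i = m" and ne: "\<not> Gd \<delta> i j st"
      and g: "\<forall>k < length ys - 1. Gd \<delta> i j (ys ! k)"
      using ys(2) by (auto simp: B2_def st_def)
    have "0 \<le> \<mu> * real m" using mu0 by simp
    then have X: "2 * sqrt (real m * L) \<le> real_of_int (fst (snd st) j i) + \<mu> * real m"
      using ne nm unfolding Gd_def thr_def L_def by simp
    have "L \<le> l * (real_of_int (fst (snd st) j i) + \<mu> * real m) - l^2 / 2 * real m"
      unfolding l_def by (rule expo_bound[OF L0 _ X]) (use m in simp)
    then have "exp L \<le> W2 l \<mu> i j st" unfolding W2_def nm by simp
    moreover have "exp L = 1 / \<delta>" unfolding L_def using d by simp
    moreover have "Psi R0 (Gd \<delta> i j) (W2 l \<mu> i j) ys = W2 l \<mu> i j st"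
      using g by (simp add: Psi_def st_def)
    ultimately show "1 / \<delta> \<le> Psi R0 (Gd \<delta> i j) (W2 l \<mu> i j) ys" by simp
  qed
  then show ?thesis by simp
qed

lemma prob_take_traj:
  assumes "Suc t \<le> T"
  shows "measure_pmf.prob (traj K \<delta> E R0 T) {xs. take (Suc t) xs \<in> B} = measure_pmf.prob (traj K \<delta> E R0 (Suc t)) B"
proof -
  have "measure_pmf.prob (traj K \<delta> E R0 (Suc t)) B = measure_pmf.prob (map_pmf (take (Suc t)) (traj K \<delta> E R0 T)) B"
    using traj_take[OF assms] by simp
  also have "\<dots> = measure_pmf.prob (traj K \<delta> E R0 T) {xs. take (Suc t) xs \<in> B}"
    by (simp add: vimage_def)
  finally show ?thesis by simp
qed

theorem lemma8:
  fixes K n :: nat and \<delta> :: real and \<alpha> :: "nat \<Rightarrow> real"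
    and PX :: "(nat list \<Rightarrow> nat \<Rightarrow> bool) pmf" and R0 :: "nat list"
  assumes "0 < \<delta>" "\<delta> < 1"
    and "\<And>i j. i < j \<Longrightarrow> j < K \<Longrightarrow> \<alpha> j < \<alpha> i"
    and "\<And>i. i < K \<Longrightarrow> 0 < \<alpha> i \<and> \<alpha> i \<le> 1"
    and "assumptions_A1_A5 K \<alpha> PX"
    and "is_list K R0"
  shows "measure_pmf.prob (traj K \<delta> (env K \<alpha> PX) R0 n)
           {xs. \<exists>t < length xs. \<not> (event_1 K \<delta> \<alpha> (xs ! t) \<and> event_2 K \<delta> (xs ! t))}
         \<le> sqrt \<delta> * real K ^ 2 * real n"
proof -
  define M where "M = traj K \<delta> (env K \<alpha> PX) R0 n"
  define Bad where "Bad = {xs. \<exists>t < length xs. \<not> (event_1 K \<delta> \<alpha> (xs ! t) \<and> event_2 K \<delta> (xs ! t))}"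
  note A = assms(5) and R0 = assms(6) and al = assms(4)
  have aij: "\<And>i j. i < j \<Longrightarrow> j < K \<Longrightarrow> \<alpha> j \<le> \<alpha> i" using assms(3) less_imp_le by blast
  show ?thesis
  proof (cases "1 \<le> sqrt \<delta> * real K ^ 2 * real n")
    case True
    have "measure_pmf.prob M Bad \<le> 1" by simp
    then show ?thesis using True unfolding M_def Bad_def by linarith
  next
    case False
    have lt0: "sqrt \<delta> * real K ^ 2 * real n < 1" using False by simp
    define Pairs where "Pairs = {(i, j). i < j \<and> j < K}"
    define I where "I = Pairs \<times> {..<n} \<times> {1..n}"
    define C :: "(nat \<times> nat) \<times> nat \<times> nat \<Rightarrow> state list set" where
      "C = (\<lambda>((i, j), t, m). {xs. take (Suc t) xs \<in> B1 \<delta> \<alpha> R0 i j m} \<union> {xs. take (Suc t) xs \<in> B2 \<delta> R0 i j m})"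
    have finP: "finite Pairs"
      by (rule finite_subset[of _ "{..<K} \<times> {..<K}"]) (auto simp: Pairs_def)
    have finI: "finite I" unfolding I_def using finP by simp
    have cover: "Bad \<inter> set_pmf M \<subseteq> (\<Union>idx\<in>I. C idx)"
    proof
      fix xs assume "xs \<in> Bad \<inter> set_pmf M"
      then have xsB: "xs \<in> Bad" and xsM: "xs \<in> set_pmf M" by auto
      have len: "length xs = n" using xsM unfolding M_def by (rule traj_len)
      obtain t where t: "t < n" "\<not> (event_1 K \<delta> \<alpha> (xs ! t) \<and> event_2 K \<delta> (xs ! t))"
        using xsB len unfolding Bad_def by auto
      obtain i j where ij: "i < j" "j < K" "\<not> E1 \<delta> \<alpha> i j (xs ! t) \<or> \<not> Gd \<delta> i j (xs ! t)"
      proof -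
        obtain a b c where abc: "xs ! t = (a, b, c)" by (metis prod_cases3)
        show ?thesis
        proof (cases "event_1 K \<delta> \<alpha> (xs ! t)")
          case False
          then show ?thesis using that unfolding abc event_1_def E1_def by auto
        next
          case True
          then have "\<not> event_2 K \<delta> (xs ! t)" using t(2) by simp
          then show ?thesis using that unfolding abc event_2_def Gd_def by auto
        qed
      qed
      define P where "P = (\<lambda>t'. t' < n \<and> (\<not> E1 \<delta> \<alpha> i j (xs ! t') \<or> \<not> Gd \<delta> i j (xs ! t')))"
      have Pt: "P t" using t ij by (simp add: P_def)
      define t0 where "t0 = (LEAST t'. P t')"
      have Pt0: "P t0" unfolding t0_def by (rule LeastI[of P t, OF Pt])
      have before: "\<And>k. k < t0 \<Longrightarrow> Gd \<delta> i j (xs ! k)"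
      proof -
        fix k assume k: "k < t0"
        then have "\<not> P k" unfolding t0_def by (rule not_less_Least)
        moreover have "k < n" using k Pt0 by (simp add: P_def)
        ultimately show "Gd \<delta> i j (xs ! k)" by (simp add: P_def)
      qed
      have t0n: "t0 < n" using Pt0 by (simp add: P_def)
      define ys where "ys = take (Suc t0) xs"
      have ys_len: "length ys = Suc t0" using t0n len by (simp add: ys_def)
      have ys_cur: "cur R0 ys = xs ! t0"
        using t0n len by (simp add: ys_def cur_def take_Suc_conv_app_nth)
      have ys_nth: "\<And>k. k < t0 \<Longrightarrow> ys ! k = xs ! k" by (simp add: ys_def)
      have ys_good: "\<forall>k < length ys - 1. Gd \<delta> i j (ys ! k)"
        using ys_len ys_nth before by simp
      obtain ys' where ys': "ys' \<in> set_pmf (traj K \<delta> (env K \<alpha> PX) R0 (Suc t0))" "xs ! t0 = cur R0 ys'"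
        using traj_nth_cur[OF xsM[unfolded M_def] t0n] by blast
      have inv: "snd (snd (xs ! t0)) i j \<le> Suc t0 \<and> \<bar>fst (snd (xs ! t0)) i j\<bar> \<le> int (snd (snd (xs ! t0)) i j) \<and>
          snd (snd (xs ! t0)) j i \<le> Suc t0 \<and> \<bar>fst (snd (xs ! t0)) j i\<bar> \<le> int (snd (snd (xs ! t0)) j i)"
        using cnt_inv[OF R0 _ _ ij(2) ys'(1)] ij ys'(2) by simp
      show "xs \<in> (\<Union>idx\<in>I. C idx)"
      proof (cases "E1 \<delta> \<alpha> i j (xs ! t0)")
        case False
        define m where "m = snd (snd (xs ! t0)) i j"
        have m0: "m \<noteq> 0"
        proof
          assume "m = 0"
          then have "fst (snd (xs ! t0)) i j = 0" using inv by (simp add: m_def)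
          then have "E1 \<delta> \<alpha> i j (xs ! t0)" using \<open>m = 0\<close> by (simp add: E1_def m_def thr_def)
          then show False using False by simp
        qed
        have "((i, j), t0, m) \<in> I" using ij t0n m0 inv by (auto simp: I_def Pairs_def m_def)
        moreover have "ys \<in> B1 \<delta> \<alpha> R0 i j m"
          unfolding B1_def using False ys_good ys_cur by (simp add: m_def)
        then have "xs \<in> C ((i, j), t0, m)" unfolding C_def ys_def by simp
        ultimately show ?thesis by blast
      next
        case True
        then have ng: "\<not> Gd \<delta> i j (xs ! t0)" using Pt0 by (simp add: P_def)
        define m where "m = snd (snd (xs ! t0)) j i"
        have m0: "m \<noteq> 0"
        proof
          assume "m = 0"
          then have "fst (snd (xs ! t0)) j i = 0" using inv by (simp add: m_def)
          then have "Gd \<delta> i j (xs ! t0)" using \<open>m = 0\<close> by (simp add: Gd_def m_def thr_def)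
          then show False using ng by simp
        qed
        have "((i, j), t0, m) \<in> I" using ij t0n m0 inv by (auto simp: I_def Pairs_def m_def)
        moreover have "ys \<in> B2 \<delta> R0 i j m"
          unfolding B2_def using ng ys_good ys_cur by (simp add: m_def)
        then have "xs \<in> C ((i, j), t0, m)" unfolding C_def ys_def by simp
        ultimately show ?thesis by blast
      qed
    qed
    have Cb: "measure_pmf.prob M (C idx) \<le> 2 * \<delta>" if idx: "idx \<in> I" for idx
    proof -
      obtain i j t m where ijtm: "idx = ((i, j), t, m)" by (cases idx) auto
      have h: "i < j" "j < K" "t < n" "0 < m" using idx unfolding ijtm I_def Pairs_def by auto
      have "measure_pmf.prob M (C idx) \<le> measure_pmf.prob M {xs. take (Suc t) xs \<in> B1 \<delta> \<alpha> R0 i j m}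
           + measure_pmf.prob M {xs. take (Suc t) xs \<in> B2 \<delta> R0 i j m}"
        unfolding ijtm C_def by (simp add: measure_Un_le)
      also have "\<dots> = measure_pmf.prob (traj K \<delta> (env K \<alpha> PX) R0 (Suc t)) (B1 \<delta> \<alpha> R0 i j m)
           + measure_pmf.prob (traj K \<delta> (env K \<alpha> PX) R0 (Suc t)) (B2 \<delta> R0 i j m)"
        unfolding M_def using h(3) by (simp add: prob_take_traj)
      also have "\<dots> \<le> \<delta> + \<delta>"
        by (intro add_mono bad1[OF A al h(1,2) aij[OF h(1,2)] R0 assms(1,2) h(4)]
                           bad2[OF A al h(1,2) aij[OF h(1,2)] R0 assms(1,2) h(4)])
      finally show ?thesis by simp
    qed
    have "measure_pmf.prob M Bad = measure_pmf.prob M (Bad \<inter> set_pmf M)"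
      by (simp add: measure_Int_set_pmf)
    also have "\<dots> \<le> measure_pmf.prob M (\<Union>idx\<in>I. C idx)"
      by (rule measure_pmf.finite_measure_mono[OF cover]) simp
    also have "\<dots> \<le> (\<Sum>idx\<in>I. measure_pmf.prob M (C idx))"
      by (rule measure_pmf.finite_measure_subadditive_finite[OF finI]) auto
    also have "\<dots> \<le> (\<Sum>idx\<in>I. 2 * \<delta>)" by (rule sum_mono[OF Cb])
    also have "\<dots> = real (card I) * (2 * \<delta>)" by simp
    also have "\<dots> \<le> sqrt \<delta> * real K ^ 2 * real n"
    proof (cases "Pairs = {}")
      case True
      then show ?thesis using assms(1) by (simp add: I_def)
    next
      case False
      then obtain i j where "i < j" "j < K" unfolding Pairs_def by auto
      then have K2: "2 \<le> K" by simp
      have cP: "card Pairs \<le> K * K"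
      proof -
        have "card Pairs \<le> card ({..<K} \<times> {..<K})"
          by (rule card_mono) (auto simp: Pairs_def)
        then show ?thesis by (simp add: card_cartesian_product)
      qed
      have cI: "card I = card Pairs * (n * n)" unfolding I_def by (simp add: card_cartesian_product)
      have cIr: "real (card I) \<le> real K ^ 2 * real n ^ 2"
      proof -
        have "card I \<le> K * K * (n * n)" unfolding cI using cP by (intro mult_right_mono) auto
        then have "real (card I) \<le> real (K * K * (n * n))" by linarith
        then show ?thesis by (simp add: power2_eq_square)
      qed
      define s where "s = sqrt \<delta>"
      have s0: "0 \<le> s" unfolding s_def using assms(1) by simp
      have ds: "\<delta> = s ^ 2" unfolding s_def using assms(1) by simp
      have K4: "4 \<le> real K ^ 2"
      proof -
        have "2 \<le> real K" using K2 by simp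
        then have "2 ^ 2 \<le> real K ^ 2" by (intro power_mono) auto
        then show ?thesis by simp
      qed
      have lt: "s * real K ^ 2 * real n < 1" using lt0 unfolding s_def by simp
      have "4 * (s * real n) \<le> real K ^ 2 * (s * real n)"
        using K4 s0 by (intro mult_right_mono) auto
      then have sn: "2 * (s * real n) \<le> 1" using lt by (simp add: algebra_simps)
      have "real (card I) * (2 * \<delta>) \<le> real K ^ 2 * real n ^ 2 * (2 * \<delta>)"
        using cIr assms(1) by (intro mult_right_mono) auto
      also have "\<dots> = (s * real K ^ 2 * real n) * (2 * (s * real n))"
        unfolding ds by (simp add: power2_eq_square algebra_simps)
      also have "\<dots> \<le> (s * real K ^ 2 * real n) * 1"
        using sn s0 by (intro mult_left_mono) auto
      finally show ?thesis unfolding s_def by simp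
    qed
    finally show ?thesis unfolding M_def Bad_def .
  qed
qed


end
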